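(* For every integer $a\ge1$, $\phi(p_{a,0})=(t-1)^a-(-1)^a$.
   Context: $p_{a,b}=\sum_{i\in\mathbb{Z}}x_i^ax_{-i}^b$ in commuting variables $x_i$, $i\in\mathbb{Z}$. A signed graph is a finite graph (loops and multiple edges allowed) with $\mathrm{sgn}:E\to\{+,-\}$; a coloring $\kappa:V\to\mathbb{Z}$ is proper if $\kappa(u)\ne\mathrm{sgn}(e)\kappa(v)$ for every edge $e$ with endpoints $u,v$. An orientation assigns to each half-edge (a loop has two) an arrow toward or away from the vertex, such that on a positive edge exactly one of the two arrows points toward its vertex and on a negative edge both point toward or both point away. A cycle is a closed walk in which, considering only the edges of the walk, every vertex of the walk has at least one arrow pointing into it and one pointing out of it; an orientation is acyclic if it has no cycle; a sink is a vertex all of whose incident arrows point toward it (an isolated vertex is a sink). A signed poset is an acyclic orientation $P$ of a signed graph. A proper coloring $\kappa$ preserves $P$ if for every edge $e$ and each endpoint $v$ of $e$, with $u$ the other endpoint ($u=v$ for a loop), the arrow of $P$ at the incidence of $e$ with $v$ points toward $v$ iff $\kappa(v)>\mathrm{sgn}(e)\kappa(u)$. $Y_P=\sum_\kappa\prod_v x_{\kappa(v)}$ over proper colorings preserving $P$; $\mathbb{Y}$ is the $\mathbb{Q}$-span of all $Y_P$ (it is closed under products and contains $p_{a,b}$ for $a\ge1,b\ge0$ and $x_0$). $\phi:\mathbb{Y}\to\mathbb{Q}[t]$ is the (unique) $\mathbb{Q}$-linear map with $\phi(Y_P)=t^{\mathrm{sink}(P)}$, $\mathrm{sink}(P)$ the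 number of sinks of $P$ (its existence is established in the paper). *)

theory Defs
  imports "HOL-Library.Multiset" "HOL-Library.FuncSet" "HOL-Computational_Algebra.Polynomial"
begin

text \<open>Signed graphs with an orientation (bidirected graphs). Vertices and edges are
  labelled by natural numbers (every finite graph is isomorphic to such a one).
  An edge e has an ordered pair of endpoints ends e = (a,b) (a loop if a = b);
  its two half-edges are the incidence with a (first) and with b (second).
  sgn e = True means positive edge. ori e = (p,q): p says whether the arrow at the
  incidence with the first endpoint points toward it, q likewise for the second.\<close>

record sposet =
  V :: "nat set"
  E :: "nat set"
  ends :: "nat \<Rightarrow> nat \<times> nat"
  sgn :: "nat \<Rightarrow> bool"
  ori :: "nat \<Rightarrow> bool \<times> bool"

definition sgnval :: "sposet \<Rightarrow> nat \<Rightarrow> int" where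
  "sgnval P e = (if sgn P e then 1 else -1)"

definition is_orientation :: "sposet \<Rightarrow> bool" where
  "is_orientation P \<longleftrightarrow> finite (V P) \<and> finite (E P) \<and>
     (\<forall>e\<in>E P. fst (ends P e) \<in> V P \<and> snd (ends P e) \<in> V P) \<and>
     (\<forall>e\<in>E P. (sgn P e \<longrightarrow> fst (ori P e) \<noteq> snd (ori P e)) \<and>
                (\<not> sgn P e \<longrightarrow> fst (ori P e) = snd (ori P e)))"

definition arrow_in :: "sposet \<Rightarrow> nat \<Rightarrow> nat \<Rightarrow> bool" where
  "arrow_in P e w \<longleftrightarrow> (fst (ends P e) = w \<and> fst (ori P e)) \<or> (snd (ends P e) = w \<and> snd (ori P e))"

definition arrow_out :: "sposet \<Rightarrow> nat \<Rightarrow> nat \<Rightarrow> bool" where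
  "arrow_out P e w \<longleftrightarrow> (fst (ends P e) = w \<and> \<not> fst (ori P e)) \<or> (snd (ends P e) = w \<and> \<not> snd (ori P e))"

definition is_cycle :: "sposet \<Rightarrow> nat \<Rightarrow> (nat \<Rightarrow> nat) \<Rightarrow> (nat \<Rightarrow> nat) \<Rightarrow> bool" where
  "is_cycle P n vs es \<longleftrightarrow> n \<ge> 1 \<and> vs n = vs 0 \<and>
     (\<forall>i<n. es i \<in> E P \<and> (ends P (es i) = (vs i, vs (Suc i)) \<or> ends P (es i) = (vs (Suc i), vs i))) \<and>
     (\<forall>w \<in> vs ` {..<n}. (\<exists>e \<in> es ` {..<n}. arrow_in P e w) \<and> (\<exists>e \<in> es ` {..<n}. arrow_out P e w))"

definition signed_poset :: "sposet \<Rightarrow> bool" where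
  "signed_poset P \<longleftrightarrow> is_orientation P \<and> (\<nexists>n vs es. is_cycle P n vs es)"

definition is_sink :: "sposet \<Rightarrow> nat \<Rightarrow> bool" where
  "is_sink P v \<longleftrightarrow> v \<in> V P \<and>
     (\<forall>e\<in>E P. (fst (ends P e) = v \<longrightarrow> fst (ori P e)) \<and> (snd (ends P e) = v \<longrightarrow> snd (ori P e)))"

definition sinks :: "sposet \<Rightarrow> nat" where
  "sinks P = card {v \<in> V P. is_sink P v}"

definition proper_col :: "sposet \<Rightarrow> (nat \<Rightarrow> int) \<Rightarrow> bool" where
  "proper_col P \<kappa> \<longleftrightarrow> (\<forall>e\<in>E P. \<kappa> (fst (ends P e)) \<noteq> sgnval P e * \<kappa> (snd (ends P e)))"

definition preserves :: "sposet \<Rightarrow> (nat \<Rightarrow> int) \<Rightarrow> bool" where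
  "preserves P \<kappa> \<longleftrightarrow> (\<forall>e\<in>E P.
     (fst (ori P e) \<longleftrightarrow> \<kappa> (fst (ends P e)) > sgnval P e * \<kappa> (snd (ends P e))) \<and>
     (snd (ori P e) \<longleftrightarrow> \<kappa> (snd (ends P e)) > sgnval P e * \<kappa> (fst (ends P e))))"

text \<open>Formal power series in commuting variables x_i (i \<in> \<int>), represented by their
  coefficient function on monomials; a monomial is a finite multiset of indices.\<close>
type_synonym fps_Z = "int multiset \<Rightarrow> rat"

text \<open>Y_P = sum over proper colorings preserving P of prod_v x_{kappa v}.\<close>
definition Y :: "sposet \<Rightarrow> fps_Z" where
  "Y P m = of_nat (card {\<kappa> \<in> V P \<rightarrow>\<^sub>E UNIV. proper_col P \<kappa> \<and> preserves P \<kappa> \<and>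
                          image_mset \<kappa> (mset_set (V P)) = m})"

text \<open>p_{a,b} = sum_i x_i^a x_{-i}^b.\<close>
definition p_ab :: "nat \<Rightarrow> nat \<Rightarrow> fps_Z" where
  "p_ab a b m = of_nat (card {i::int. replicate_mset a i + replicate_mset b (- i) = m})"

definition represents :: "(rat \<times> sposet) list \<Rightarrow> fps_Z \<Rightarrow> bool" where
  "represents cs f \<longleftrightarrow> (\<forall>(c, P) \<in> set cs. signed_poset P) \<and>
     (\<forall>m. (\<Sum>(c, P)\<leftarrow>cs. c * Y P m) = f m)"

definition phi_comb :: "(rat \<times> sposet) list \<Rightarrow> rat poly" where
  "phi_comb cs = (\<Sum>(c, P)\<leftarrow>cs. monom c (sinks P))"

end

theory Submission
  imports Defs
begin


definition sinks_set :: "sposet \<Rightarrow> nat set" where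
  "sinks_set P = {v\<in>V P. is_sink P v}"
definition is_source :: "sposet \<Rightarrow> nat \<Rightarrow> bool" where
  "is_source P v \<longleftrightarrow> v \<in> V P \<and> (\<forall>e\<in>E P. (fst (ends P e) = v \<longrightarrow> \<not> fst (ori P e)) \<and> (snd (ends P e) = v \<longrightarrow> \<not> snd (ori P e)))"
definition sources_set :: "sposet \<Rightarrow> nat set" where
  "sources_set P = {v\<in>V P. is_source P v}"

definition restr :: "sposet \<Rightarrow> nat set \<Rightarrow> sposet" where
  "restr P W = P\<lparr>V := W, E := {e\<in>E P. fst (ends P e) \<in> W \<and> snd (ends P e) \<in> W}\<rparr>"

definition topc :: "nat set \<Rightarrow> (nat \<Rightarrow> int) \<Rightarrow> int" where
  "topc W k = Max (insert 0 ((\<lambda>v. \<bar>k v\<bar>) ` W))"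

definition compr :: "nat set \<Rightarrow> (nat \<Rightarrow> int) \<Rightarrow> bool" where
  "compr W k \<longleftrightarrow> (\<forall>j. 1 \<le> j \<and> j \<le> topc W k \<longrightarrow> (\<exists>v\<in>W. \<bar>k v\<bar> = j))"

definition KK :: "sposet \<Rightarrow> (nat \<Rightarrow> int) set" where
  "KK P = {k \<in> V P \<rightarrow>\<^sub>E UNIV. proper_col P k \<and> preserves P k \<and> compr (V P) k}"

definition extc :: "nat set \<Rightarrow> nat set \<Rightarrow> int \<Rightarrow> (nat \<Rightarrow> int) \<Rightarrow> nat \<Rightarrow> int" where
  "extc Sp Sm N k = (\<lambda>v. if v \<in> Sp then N else if v \<in> Sm then -N else k v)"

definition Pairs :: "sposet \<Rightarrow> (nat set \<times> nat set) set" where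
  "Pairs P = {(Sp,Sm). Sp \<subseteq> sinks_set P \<and> Sm \<subseteq> sources_set P \<and> Sp \<inter> Sm = {} \<and> Sp \<union> Sm \<noteq> {}}"

lemma topc_ge: "finite W \<Longrightarrow> v \<in> W \<Longrightarrow> \<bar>k v\<bar> \<le> topc W k"
  unfolding topc_def by (rule Max_ge) auto

lemma topc_nonneg: "finite W \<Longrightarrow> 0 \<le> topc W k"
  unfolding topc_def by (rule Max_ge) auto

lemma topc_le: "finite W \<Longrightarrow> (\<And>v. v \<in> W \<Longrightarrow> \<bar>k v\<bar> \<le> c) \<Longrightarrow> 0 \<le> c \<Longrightarrow> topc W k \<le> c"
  unfolding topc_def by (subst Max_le_iff) auto

lemma topc_attained: "finite W \<Longrightarrow> 0 < topc W k \<Longrightarrow> \<exists>v\<in>W. \<bar>k v\<bar> = topc W k"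
proof -
  assume f: "finite W" and p: "0 < topc W k"
  have "topc W k \<in> insert 0 ((\<lambda>v. \<bar>k v\<bar>) ` W)"
    unfolding topc_def by (rule Max_in) (use f in auto)
  with p show ?thesis by auto
qed

lemma topc_cong: "(\<And>v. v \<in> W \<Longrightarrow> k v = k' v) \<Longrightarrow> topc W k = topc W k'"
  unfolding topc_def by (simp cong: image_cong)

lemma compr_bound:
  assumes f: "finite W" and c: "compr W k"
  shows "topc W k \<le> int (card W)"
proof -
  have "{1..topc W k} \<subseteq> (\<lambda>v. \<bar>k v\<bar>) ` W" using c unfolding compr_def by force
  hence "card {1..topc W k} \<le> card ((\<lambda>v. \<bar>k v\<bar>) ` W)" by (intro card_mono) (use f in auto)
  also have "\<dots> \<le> card W" by (rule card_image_le[OF f])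
  finally show ?thesis by simp
qed

lemma is_orientation_fin: "is_orientation P \<Longrightarrow> finite (V P)"
  unfolding is_orientation_def by auto

lemma KK_finite:
  assumes o: "is_orientation P"
  shows "finite (KK P)"
proof -
  have f: "finite (V P)" using o by (rule is_orientation_fin)
  have "KK P \<subseteq> V P \<rightarrow>\<^sub>E {- int (card (V P)) .. int (card (V P))}"
  proof
    fix k assume k: "k \<in> KK P"
    hence c: "compr (V P) k" and pe: "k \<in> V P \<rightarrow>\<^sub>E UNIV" unfolding KK_def by auto
    have "- int (card (V P)) \<le> k v \<and> k v \<le> int (card (V P))" if "v \<in> V P" for v
      using topc_ge[OF f that, of k] compr_bound[OF f c] by linarith
    thus "k \<in> V P \<rightarrow>\<^sub>E {- int (card (V P)) .. int (card (V P))}"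
      using pe by (auto simp: PiE_def Pi_def)
  qed
  moreover have "finite (V P \<rightarrow>\<^sub>E {- int (card (V P)) .. int (card (V P))})"
    by (intro finite_PiE f) auto
  ultimately show ?thesis by (rule finite_subset)
qed

lemma restr_simps [simp]:
  "V (restr P W) = W" "E (restr P W) = {e\<in>E P. fst (ends P e) \<in> W \<and> snd (ends P e) \<in> W}"
  "ends (restr P W) = ends P" "sgn (restr P W) = sgn P" "ori (restr P W) = ori P"
  unfolding restr_def by auto

lemma sgnval_restr [simp]: "sgnval (restr P W) = sgnval P"
  unfolding sgnval_def by (auto intro!: ext)


lemma orient_facts:
  assumes "is_orientation P" "e \<in> E P"
  shows "fst (ends P e) \<in> V P" "snd (ends P e) \<in> V P"
    "sgn P e \<Longrightarrow> fst (ori P e) \<noteq> snd (ori P e)" "\<not> sgn P e \<Longrightarrow> fst (ori P e) = snd (ori P e)"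
  using assms unfolding is_orientation_def by auto

lemma restr_part:
  assumes o: "is_orientation P" and k: "k \<in> KK P" and N: "topc (V P) k = N" and N1: "N \<ge> 1"
    and Sp_def: "Sp = {v\<in>V P. k v = N}" and Sm_def: "Sm = {v\<in>V P. k v = -N}" and W_def: "W = V P - Sp - Sm"
  shows "(Sp,Sm) \<in> Pairs P" "restrict k W \<in> KK (restr P W)" "topc W (restrict k W) = N - 1"
    "extc Sp Sm N (restrict k W) = k"
proof -
  have f: "finite (V P)" using o by (rule is_orientation_fin)
  have pe: "k \<in> V P \<rightarrow>\<^sub>E UNIV" and pc: "proper_col P k" and pr: "preserves P k" and c: "compr (V P) k"
    using k unfolding KK_def by auto
  have bd: "\<bar>k v\<bar> \<le> N" if "v \<in> V P" for v using topc_ge[OF f that, of k] N by simp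
  have W: "v \<in> W \<longleftrightarrow> v \<in> V P \<and> \<bar>k v\<bar> < N" for v
    using bd[of v] unfolding W_def Sp_def Sm_def by (cases "v \<in> V P") (auto simp: abs_if)
  have edge: "k (fst (ends P e)) \<noteq> sgnval P e * k (snd (ends P e))"
     "fst (ori P e) = (k (fst (ends P e)) > sgnval P e * k (snd (ends P e)))"
     "snd (ori P e) = (k (snd (ends P e)) > sgnval P e * k (fst (ends P e)))"
     "fst (ends P e) \<in> V P" "snd (ends P e) \<in> V P" if "e \<in> E P" for e
    using pc pr orient_facts[OF o that] that unfolding proper_col_def preserves_def by auto
  have sv: "sgnval P e = 1 \<or> sgnval P e = -1" for e unfolding sgnval_def by auto
  have "Sp \<subseteq> sinks_set P"
  proof
    fix v assume v: "v \<in> Sp"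
    have "fst (ori P e)" if "e \<in> E P" "fst (ends P e) = v" for e
    proof -
      have "k v = N" using v unfolding Sp_def by auto
      moreover have "\<bar>k (snd (ends P e))\<bar> \<le> N" using bd edge(5)[OF that(1)] by blast
      ultimately show ?thesis using edge(1,2)[OF that(1)] sv[of e] that(2) by (auto simp: abs_le_iff)
    qed
    moreover have "snd (ori P e)" if "e \<in> E P" "snd (ends P e) = v" for e
    proof -
      have "k v = N" using v unfolding Sp_def by auto
      moreover have "\<bar>k (fst (ends P e))\<bar> \<le> N" using bd edge(4)[OF that(1)] by blast
      ultimately show ?thesis using edge(1,3)[OF that(1)] sv[of e] that(2) by (auto simp: abs_le_iff)
    qed
    ultimately show "v \<in> sinks_set P" using v unfolding sinks_set_def is_sink_def Sp_def by auto
  qed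
  moreover have "Sm \<subseteq> sources_set P"
  proof
    fix v assume v: "v \<in> Sm"
    have "\<not> fst (ori P e)" if "e \<in> E P" "fst (ends P e) = v" for e
    proof -
      have "k v = -N" using v unfolding Sm_def by auto
      moreover have "\<bar>k (snd (ends P e))\<bar> \<le> N" using bd edge(5)[OF that(1)] by blast
      ultimately show ?thesis using edge(1,2)[OF that(1)] sv[of e] that(2) by (auto simp: abs_le_iff)
    qed
    moreover have "\<not> snd (ori P e)" if "e \<in> E P" "snd (ends P e) = v" for e
    proof -
      have "k v = -N" using v unfolding Sm_def by auto
      moreover have "\<bar>k (fst (ends P e))\<bar> \<le> N" using bd edge(4)[OF that(1)] by blast
      ultimately show ?thesis using edge(1,3)[OF that(1)] sv[of e] that(2) by (auto simp: abs_le_iff)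
    qed
    ultimately show "v \<in> sources_set P" using v unfolding sources_set_def is_source_def Sm_def by auto
  qed
  moreover have "Sp \<inter> Sm = {}" using N1 unfolding Sp_def Sm_def by auto
  moreover have "Sp \<union> Sm \<noteq> {}"
  proof -
    obtain v where "v \<in> V P" "\<bar>k v\<bar> = N" using topc_attained[OF f, of k] N N1 by auto
    thus ?thesis unfolding Sp_def Sm_def by (auto simp: abs_if split: if_splits)
  qed
  ultimately show "(Sp,Sm) \<in> Pairs P" unfolding Pairs_def by auto
  have fW: "finite W" using f unfolding W_def by auto
  have topW: "topc W (restrict k W) = N - 1"
  proof (cases "N = 1")
    case True
    have "topc W (restrict k W) \<le> 0"
    proof (rule topc_le[OF fW])
      fix v assume "v \<in> W"
      hence "\<bar>k v\<bar> < N" using W by blast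
      thus "\<bar>restrict k W v\<bar> \<le> 0" using \<open>v \<in> W\<close> True by simp
    qed simp
    thus ?thesis using topc_nonneg[OF fW, of "restrict k W"] True by simp
  next
    case False
    have "topc W (restrict k W) \<le> N - 1"
    proof (rule topc_le[OF fW])
      fix v assume "v \<in> W"
      hence "\<bar>k v\<bar> < N" using W by blast
      thus "\<bar>restrict k W v\<bar> \<le> N - 1" using \<open>v \<in> W\<close> by simp
    qed (use N1 in simp)
    moreover obtain u where "u \<in> V P" "\<bar>k u\<bar> = N - 1"
    proof -
      have "1 \<le> N - 1 \<and> N - 1 \<le> topc (V P) k" using N N1 False by simp
      thus ?thesis using that c unfolding compr_def by blast
    qed
    hence "u \<in> W" "\<bar>restrict k W u\<bar> = N - 1" using W by auto
    hence "N - 1 \<le> topc W (restrict k W)" using topc_ge[OF fW, of u "restrict k W"] by auto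
    ultimately show ?thesis by simp
  qed
  thus "topc W (restrict k W) = N - 1" .
  have "compr W (restrict k W)"
    unfolding compr_def topW
  proof (intro allI impI)
    fix j :: int assume j: "1 \<le> j \<and> j \<le> N - 1"
    then obtain v where "v \<in> V P" "\<bar>k v\<bar> = j" using c N unfolding compr_def by force
    thus "\<exists>v\<in>W. \<bar>restrict k W v\<bar> = j" using W j by (intro bexI[of _ v]) auto
  qed
  moreover have "proper_col (restr P W) (restrict k W)" "preserves (restr P W) (restrict k W)"
    using pc pr unfolding proper_col_def preserves_def by auto
  ultimately show "restrict k W \<in> KK (restr P W)" unfolding KK_def by auto
  show "extc Sp Sm N (restrict k W) = k"
  proof
    fix v
    have dj: "Sp \<inter> Sm = {}" using N1 unfolding Sp_def Sm_def by auto
    consider "v \<in> Sp" | "v \<in> Sm" | "v \<in> W" | "v \<notin> V P" using W_def by blast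
    then show "extc Sp Sm N (restrict k W) v = k v"
    proof cases
      case 1 thus ?thesis unfolding extc_def Sp_def by simp
    next
      case 2 thus ?thesis using dj unfolding extc_def Sm_def by auto
    next
      case 3 thus ?thesis unfolding extc_def W_def by simp
    next
      case 4
      hence "v \<notin> Sp" "v \<notin> Sm" "v \<notin> W" unfolding Sp_def Sm_def W_def by auto
      thus ?thesis using 4 pe unfolding extc_def by (simp add: PiE_def extensional_def)
    qed
  qed
qed


lemma edge_arith:
  fixes kx ky N s :: int
  assumes N: "N \<ge> 1" and s: "s = (if sg then 1 else -1)" and o1: "sg \<longrightarrow> p \<noteq> q" and o2: "\<not> sg \<longrightarrow> p = q"
    and c: "(kx = N \<and> p \<or> kx = -N \<and> \<not> p) \<and> (ky = N \<and> q \<or> ky = -N \<and> \<not> q \<or> \<bar>ky\<bar> < N) \<or>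
            \<bar>kx\<bar> < N \<and> (ky = N \<and> q \<or> ky = -N \<and> \<not> q)"
  shows "kx \<noteq> s * ky \<and> (p \<longleftrightarrow> kx > s * ky) \<and> (q \<longleftrightarrow> ky > s * kx)"
  using assms by (cases sg) (auto simp: abs_less_iff)


lemma ext_part:
  assumes o: "is_orientation P" and pr: "(Sp,Sm) \<in> Pairs P" and W_def: "W = V P - Sp - Sm"
    and k: "k \<in> KK (restr P W)" and N_def: "N = topc W k + 1"
  shows "extc Sp Sm N k \<in> KK P" "topc (V P) (extc Sp Sm N k) = N"
    "{v\<in>V P. extc Sp Sm N k v = N} = Sp" "{v\<in>V P. extc Sp Sm N k v = -N} = Sm"
    "restrict (extc Sp Sm N k) W = k"
proof -
  have f: "finite (V P)" using o by (rule is_orientation_fin)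
  have fW: "finite W" using f W_def by auto
  have Sp: "Sp \<subseteq> sinks_set P" and Sm: "Sm \<subseteq> sources_set P" and dj: "Sp \<inter> Sm = {}" and ne: "Sp \<union> Sm \<noteq> {}"
    using pr unfolding Pairs_def by auto
  have SpV: "Sp \<subseteq> V P" and SmV: "Sm \<subseteq> V P" using Sp Sm unfolding sinks_set_def sources_set_def by auto
  have pe: "k \<in> W \<rightarrow>\<^sub>E UNIV" and pc: "proper_col (restr P W) k" and pv: "preserves (restr P W) k"
    and c: "compr W k" using k unfolding KK_def by auto
  have N1: "N \<ge> 1" using topc_nonneg[OF fW, of k] N_def by simp
  have bdW: "\<bar>k v\<bar> < N" if "v \<in> W" for v using topc_ge[OF fW that, of k] N_def by simp
  let ?K = "extc Sp Sm N k"
  have Kp: "?K v = N" if "v \<in> Sp" for v using that unfolding extc_def by simp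
  have Km: "?K v = -N" if "v \<in> Sm" for v using that dj unfolding extc_def by auto
  have KW: "?K v = k v" if "v \<in> W" for v using that W_def unfolding extc_def by simp
  have cases3: "v \<in> Sp \<or> v \<in> Sm \<or> v \<in> W" if "v \<in> V P" for v using that W_def by auto
  have Wsub: "W \<subseteq> V P" using W_def by auto
  have sinkp: "(fst (ends P e) = v \<longrightarrow> fst (ori P e)) \<and> (snd (ends P e) = v \<longrightarrow> snd (ori P e))"
    if "v \<in> Sp" "e \<in> E P" for v e using Sp that unfolding sinks_set_def is_sink_def by auto
  have sourcep: "(fst (ends P e) = v \<longrightarrow> \<not> fst (ori P e)) \<and> (snd (ends P e) = v \<longrightarrow> \<not> snd (ori P e))"
    if "v \<in> Sm" "e \<in> E P" for v e using Sm that unfolding sources_set_def is_source_def by auto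
  have pe2: "?K \<in> V P \<rightarrow>\<^sub>E UNIV"
    using pe SpV SmV W_def unfolding extc_def by (auto simp: PiE_def extensional_def)
  have edges: "?K (fst (ends P e)) \<noteq> sgnval P e * ?K (snd (ends P e)) \<and>
      (fst (ori P e) \<longleftrightarrow> ?K (fst (ends P e)) > sgnval P e * ?K (snd (ends P e))) \<and>
      (snd (ori P e) \<longleftrightarrow> ?K (snd (ends P e)) > sgnval P e * ?K (fst (ends P e)))" if e: "e \<in> E P" for e
  proof -
    let ?x = "fst (ends P e)" and ?y = "snd (ends P e)"
    have xV: "?x \<in> V P" and yV: "?y \<in> V P" and o1: "sgn P e \<longrightarrow> fst (ori P e) \<noteq> snd (ori P e)"
      and o2: "\<not> sgn P e \<longrightarrow> fst (ori P e) = snd (ori P e)"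
      using orient_facts[OF o e] by auto
    show ?thesis
    proof (cases "?x \<in> W \<and> ?y \<in> W")
      case True
      hence "e \<in> E (restr P W)" using e by simp
      hence A: "k ?x \<noteq> sgnval P e * k ?y \<and> (fst (ori P e) \<longleftrightarrow> k ?x > sgnval P e * k ?y) \<and>
          (snd (ori P e) \<longleftrightarrow> k ?y > sgnval P e * k ?x)"
        using pc pv unfolding proper_col_def preserves_def restr_simps sgnval_restr by blast
      have "?K ?x = k ?x" "?K ?y = k ?y" using KW True by blast+
      thus ?thesis using A by simp
    next
      case False
      have "(?K ?x = N \<and> fst (ori P e) \<or> ?K ?x = -N \<and> \<not> fst (ori P e)) \<and>
            (?K ?y = N \<and> snd (ori P e) \<or> ?K ?y = -N \<and> \<not> snd (ori P e) \<or> \<bar>?K ?y\<bar> < N) \<or>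
            \<bar>?K ?x\<bar> < N \<and> (?K ?y = N \<and> snd (ori P e) \<or> ?K ?y = -N \<and> \<not> snd (ori P e))"
        using cases3[OF xV] cases3[OF yV] False Kp Km KW bdW sinkp[OF _ e] sourcep[OF _ e] by metis
      thus ?thesis using edge_arith[OF N1 sgnval_def o1 o2] by blast
    qed
  qed
  have top: "topc (V P) ?K = N"
  proof -
    have "topc (V P) ?K \<le> N"
    proof (rule topc_le[OF f])
      fix v assume "v \<in> V P"
      then consider "v \<in> Sp" | "v \<in> Sm" | "v \<in> W" using cases3 by blast
      thus "\<bar>?K v\<bar> \<le> N"
      proof cases
        case 1 thus ?thesis using Kp[OF 1] N1 by simp
      next
        case 2 thus ?thesis using Km[OF 2] N1 by simp
      next
        case 3 thus ?thesis using KW[OF 3] bdW[OF 3] by simp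
      qed
    qed (use N1 in simp)
    moreover obtain v where "v \<in> Sp \<union> Sm" using ne by auto
    hence "v \<in> V P" "\<bar>?K v\<bar> = N" using SpV SmV Kp Km N1 by auto
    hence "N \<le> topc (V P) ?K" using topc_ge[OF f, of v ?K] by simp
    ultimately show ?thesis by simp
  qed
  thus "topc (V P) ?K = N" .
  have "compr (V P) ?K"
    unfolding compr_def top
  proof (intro allI impI)
    fix j :: int assume j: "1 \<le> j \<and> j \<le> N"
    show "\<exists>v\<in>V P. \<bar>?K v\<bar> = j"
    proof (cases "j = N")
      case True
      obtain v where "v \<in> Sp \<union> Sm" using ne by auto
      thus ?thesis using SpV SmV Kp Km N1 True by (intro bexI[of _ v]) auto
    next
      case False
      hence "1 \<le> j \<and> j \<le> topc W k" using j N_def by simp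
      then obtain v where "v \<in> W" "\<bar>k v\<bar> = j" using c unfolding compr_def by blast
      thus ?thesis using KW Wsub by (intro bexI[of _ v]) auto
    qed
  qed
  thus "?K \<in> KK P" using pe2 edges unfolding KK_def proper_col_def preserves_def by auto
  show "{v\<in>V P. ?K v = N} = Sp"
  proof (intro set_eqI iffI)
    fix v assume v: "v \<in> {v\<in>V P. ?K v = N}"
    hence "v \<in> Sp \<or> v \<in> Sm \<or> v \<in> W" "?K v = N" using cases3 by auto
    moreover have "v \<notin> Sm" using Km[of v] \<open>?K v = N\<close> N1 by auto
    moreover have "v \<notin> W" using KW[of v] bdW[of v] \<open>?K v = N\<close> by auto
    ultimately show "v \<in> Sp" by blast
  qed (use SpV Kp in auto)
  show "{v\<in>V P. ?K v = -N} = Sm"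
  proof (intro set_eqI iffI)
    fix v assume v: "v \<in> {v\<in>V P. ?K v = -N}"
    hence "v \<in> Sp \<or> v \<in> Sm \<or> v \<in> W" "?K v = -N" using cases3 by auto
    moreover have "v \<notin> Sp" using Kp[of v] \<open>?K v = -N\<close> N1 by auto
    moreover have "v \<notin> W" using KW[of v] bdW[of v] \<open>?K v = -N\<close> by auto
    ultimately show "v \<in> Sm" by blast
  qed (use SmV Km in auto)
  show "restrict ?K W = k"
  proof
    fix v show "restrict ?K W v = k v" using KW pe by (auto simp: PiE_def extensional_def)
  qed
qed


lemma Pairs_finite: "is_orientation P \<Longrightarrow> finite (Pairs P)"
proof -
  assume o: "is_orientation P"
  have "Pairs P \<subseteq> Pow (V P) \<times> Pow (V P)"
    unfolding Pairs_def sinks_set_def sources_set_def by auto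
  moreover have "finite (Pow (V P) \<times> Pow (V P))" using is_orientation_fin[OF o] by simp
  ultimately show ?thesis by (rule finite_subset)
qed

lemma restr_orient: "is_orientation P \<Longrightarrow> W \<subseteq> V P \<Longrightarrow> is_orientation (restr P W)"
  unfolding is_orientation_def using finite_subset by auto

lemma decomp:
  fixes g :: "(nat \<Rightarrow> int) \<Rightarrow> 'a::comm_monoid_add"
  assumes o: "is_orientation P"
  shows "(\<Sum>k\<in>KK P. g k) = (if E P = {} then g (\<lambda>v. if v \<in> V P then 0 else undefined) else 0) +
     (\<Sum>pr\<in>Pairs P. \<Sum>k'\<in>KK (restr P (V P - fst pr - snd pr)).
         g (extc (fst pr) (snd pr) (topc (V P - fst pr - snd pr) k' + 1) k'))"
proof -
  have f: "finite (V P)" using o by (rule is_orientation_fin)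
  let ?z = "\<lambda>v. if v \<in> V P then 0 else (undefined::int)"
  define K0 where "K0 = {k\<in>KK P. topc (V P) k = 0}"
  define K1 where "K1 = {k\<in>KK P. topc (V P) k \<noteq> 0}"
  have fK: "finite (KK P)" using o by (rule KK_finite)
  have split: "KK P = K0 \<union> K1" "K0 \<inter> K1 = {}" unfolding K0_def K1_def by auto
  have A: "(\<Sum>k\<in>KK P. g k) = sum g K0 + sum g K1"
  proof -
    have "finite K0" "finite K1" using fK unfolding K0_def K1_def by auto
    thus ?thesis unfolding split(1) by (rule sum.union_disjoint) (rule split(2))
  qed
  have "K0 = (if E P = {} then {?z} else {})"
  proof -
    have z: "k = ?z" if "k \<in> K0" for k
    proof
      fix v
      from that have k: "k \<in> V P \<rightarrow>\<^sub>E UNIV" "topc (V P) k = 0" unfolding K0_def KK_def by auto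
      show "k v = ?z v"
      proof (cases "v \<in> V P")
        case True thus ?thesis using topc_ge[OF f True, of k] k by simp
      next
        case False thus ?thesis using k by (simp add: PiE_def extensional_def)
      qed
    qed
    show ?thesis
    proof (cases "E P = {}")
      case True
      have tz: "topc (V P) ?z = 0"
        using topc_le[OF f, of ?z 0] topc_nonneg[OF f, of ?z] by simp
      have "compr (V P) ?z" unfolding compr_def using tz by auto
      hence "?z \<in> KK P" unfolding KK_def proper_col_def preserves_def
        using True by (auto simp: PiE_def extensional_def)
      hence zK: "?z \<in> K0" unfolding K0_def using tz by simp
      have "K0 = {?z}"
      proof (intro equalityI subsetI)
        fix k assume "k \<in> K0" thus "k \<in> {?z}" using z by blast
      qed (use zK in blast)
      thus ?thesis using True by simp
    next
      case False
      then obtain e where e: "e \<in> E P" by auto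
      have "K0 = {}"
      proof (rule ccontr)
        assume "K0 \<noteq> {}"
        then obtain k where k: "k \<in> K0" by auto
        hence "k = ?z" by (rule z)
        moreover have "proper_col P k" using k unfolding K0_def KK_def by auto
        ultimately show False using e orient_facts[OF o e] unfolding proper_col_def by auto
      qed
      thus ?thesis using False by simp
    qed
  qed
  hence B0: "sum g K0 = (if E P = {} then g ?z else 0)" by simp
  define B where "B = (\<lambda>pr. KK (restr P (V P - fst pr - snd pr)))"
  define G where "G = (\<lambda>pr k'. g (extc (fst pr) (snd pr) (topc (V P - fst pr - snd pr) k' + 1) k'))"
  define jj where "jj = (\<lambda>x::(nat set \<times> nat set) \<times> (nat \<Rightarrow> int).
     extc (fst (fst x)) (snd (fst x)) (topc (V P - fst (fst x) - snd (fst x)) (snd x) + 1) (snd x))"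
  define ii where "ii = (\<lambda>k. (({v\<in>V P. k v = topc (V P) k}, {v\<in>V P. k v = - topc (V P) k}),
                    restrict k (V P - {v\<in>V P. k v = topc (V P) k} - {v\<in>V P. k v = - topc (V P) k})))"
  have C: "sum g K1 = (\<Sum>x\<in>Sigma (Pairs P) B. G (fst x) (snd x))"
  proof (rule sum.reindex_bij_witness[symmetric, where j = jj and i = ii])
    fix x assume x: "x \<in> Sigma (Pairs P) B"
    obtain Sp Sm k' where xe: "x = ((Sp,Sm),k')" by (metis prod.collapse)
    have pr: "(Sp,Sm) \<in> Pairs P" and k': "k' \<in> KK (restr P (V P - Sp - Sm))" using x xe B_def by auto
    note E = ext_part[OF o pr refl k' refl]
    have jx: "jj ((Sp,Sm),k') = extc Sp Sm (topc (V P - Sp - Sm) k' + 1) k'" unfolding jj_def by simp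
    show "ii (jj x) = x" unfolding xe jx ii_def E(2) E(3) E(4) E(5) by simp
    have "topc (V P - Sp - Sm) k' + 1 \<noteq> 0"
      using topc_nonneg[of "V P - Sp - Sm" k'] f by simp
    thus "jj x \<in> K1" using E(1) E(2) unfolding xe jx K1_def by simp
    show "g (jj x) = G (fst x) (snd x)" unfolding G_def jj_def by simp
  next
    fix k assume k: "k \<in> K1"
    hence kK: "k \<in> KK P" and N: "topc (V P) k \<noteq> 0" unfolding K1_def by auto
    hence N1: "topc (V P) k \<ge> 1" using topc_nonneg[OF f, of k] by simp
    note R = restr_part[OF o kK refl N1 refl refl refl]
    have ik: "ii k = (({v\<in>V P. k v = topc (V P) k}, {v\<in>V P. k v = - topc (V P) k}),
                    restrict k (V P - {v\<in>V P. k v = topc (V P) k} - {v\<in>V P. k v = - topc (V P) k}))"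
      unfolding ii_def ..
    show "jj (ii k) = k" unfolding ik jj_def fst_conv snd_conv R(3) using R(4) by simp
    show "ii k \<in> Sigma (Pairs P) B" unfolding ik B_def using R(1) R(2) by simp
  qed
  have D: "(\<Sum>x\<in>Sigma (Pairs P) B. G (fst x) (snd x)) = (\<Sum>pr\<in>Pairs P. sum (G pr) (B pr))"
    by (rule sum.Sigma[symmetric, unfolded split_def]) (use Pairs_finite[OF o] o in
        \<open>auto simp: B_def intro!: KK_finite restr_orient\<close>)
  show ?thesis unfolding A B0 C D unfolding G_def B_def by simp
qed


lemma pow_sum:
  fixes x :: "'a::comm_ring_1"
  assumes "finite A"
  shows "(\<Sum>S\<in>Pow A. x ^ card S) = (x + 1) ^ card A"
  using assms
proof (induction A rule: finite_induct)
  case empty thus ?case by simp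
next
  case (insert a A)
  have inj: "inj_on (insert a) (Pow A)" using insert(2) by (auto simp: inj_on_def)
  have dj: "Pow A \<inter> insert a ` Pow A = {}" using insert(2) by auto
  have "(\<Sum>S\<in>Pow (insert a A). x ^ card S) = (\<Sum>S\<in>Pow A. x ^ card S) + (\<Sum>S\<in>insert a ` Pow A. x ^ card S)"
    unfolding Pow_insert by (rule sum.union_disjoint) (use insert(1) dj in auto)
  also have "(\<Sum>S\<in>insert a ` Pow A. x ^ card S) = (\<Sum>S\<in>Pow A. x ^ card (insert a S))"
    by (rule sum.reindex[OF inj, unfolded comp_def])
  also have "\<dots> = (\<Sum>S\<in>Pow A. x * x ^ card S)"
  proof (rule sum.cong[OF refl])
    fix S assume "S \<in> Pow A"
    hence "finite S" "a \<notin> S" using insert(1,2) finite_subset by auto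
    thus "x ^ card (insert a S) = x * x ^ card S" by simp
  qed
  finally show ?case using insert by (simp add: sum_distrib_left[symmetric] algebra_simps)
qed

definition PairsAll :: "nat set \<Rightarrow> nat set \<Rightarrow> (nat set \<times> nat set) set" where
  "PairsAll A B = {(X,Y). X \<subseteq> A \<and> Y \<subseteq> B \<and> X \<inter> Y = {}}"

lemma sum_PairsAll:
  assumes "finite A" "finite B"
  shows "(\<Sum>p\<in>PairsAll A B. f p) = (\<Sum>Y\<in>Pow B. \<Sum>X\<in>Pow (A - Y). f (X,Y))"
proof -
  have "(\<Sum>Y\<in>Pow B. \<Sum>X\<in>Pow (A - Y). f (X,Y)) = (\<Sum>q\<in>Sigma (Pow B) (\<lambda>Y. Pow (A - Y)). f (snd q, fst q))"
    by (rule sum.Sigma[unfolded split_def]) (use assms in auto)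
  also have "\<dots> = (\<Sum>p\<in>PairsAll A B. f p)"
    by (rule sum.reindex_bij_witness[where i = "\<lambda>p. (snd p, fst p)" and j = "\<lambda>q. (snd q, fst q)"])
       (auto simp: PairsAll_def)
  finally show ?thesis by simp
qed

lemma PairsAll_alt:
  fixes A B :: "nat set"
  assumes fA: "finite A" and fB: "finite B"
  shows "(\<Sum>p\<in>PairsAll A B. (-1::'a::comm_ring_1) ^ (card (fst p) + card (snd p))) = (if A = B then (-1) ^ card A else 0)"
proof -
  have "(\<Sum>p\<in>PairsAll A B. (-1::'a) ^ (card (fst p) + card (snd p))) =
        (\<Sum>Y\<in>Pow B. (-1) ^ card Y * (\<Sum>X\<in>Pow (A - Y). (-1) ^ card X))"
    unfolding sum_PairsAll[OF fA fB] by (simp add: sum_distrib_left power_add mult.commute)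
  also have "\<dots> = (\<Sum>Y\<in>Pow B. (-1) ^ card Y * (if A \<subseteq> Y then 1 else 0))"
  proof (rule sum.cong[OF refl])
    fix Y assume "Y \<in> Pow B"
    have "(\<Sum>X\<in>Pow (A - Y). (-1::'a) ^ card X) = (-1 + 1) ^ card (A - Y)"
      by (rule pow_sum) (use fA in auto)
    also have "\<dots> = (if A \<subseteq> Y then 1 else 0)"
    proof -
      have "card (A - Y) = 0 \<longleftrightarrow> A \<subseteq> Y" using fA by (auto simp: card_eq_0_iff)
      thus ?thesis by (simp add: power_0_left)
    qed
    finally show "(-1) ^ card Y * (\<Sum>X\<in>Pow (A - Y). (-1::'a) ^ card X) = (-1) ^ card Y * (if A \<subseteq> Y then 1 else 0)" by simp
  qed
  also have "\<dots> = (\<Sum>Y\<in>{Y\<in>Pow B. A \<subseteq> Y}. (-1) ^ card Y)"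
  proof -
    have "(\<Sum>Y\<in>{Y\<in>Pow B. A \<subseteq> Y}. (-1::'a) ^ card Y) = (\<Sum>Y\<in>Pow B. if A \<subseteq> Y then (-1) ^ card Y else 0)"
      by (rule sum.inter_filter) (use fB in simp)
    thus ?thesis by (simp add: if_distrib cong: if_cong)
  qed
  also have "\<dots> = (if A = B then (-1) ^ card A else 0)"
  proof (cases "A \<subseteq> B")
    case False
    hence e: "{Y\<in>Pow B. A \<subseteq> Y} = {}" by auto
    have "A \<noteq> B" using False by auto
    thus ?thesis unfolding e by simp
  next
    case True
    have inj: "inj_on (\<lambda>Z. A \<union> Z) (Pow (B - A))" unfolding inj_on_def by blast
    have im: "(\<lambda>Z. A \<union> Z) ` Pow (B - A) = {Y\<in>Pow B. A \<subseteq> Y}"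
    proof (intro equalityI subsetI)
      fix Y assume "Y \<in> {Y\<in>Pow B. A \<subseteq> Y}"
      hence "Y = A \<union> (Y - A)" "Y - A \<in> Pow (B - A)" by auto
      thus "Y \<in> (\<lambda>Z. A \<union> Z) ` Pow (B - A)" by (rule image_eqI)
    qed (use True in auto)
    have "(\<Sum>Y\<in>{Y\<in>Pow B. A \<subseteq> Y}. (-1::'a) ^ card Y) = (\<Sum>Z\<in>Pow (B - A). (-1) ^ card (A \<union> Z))"
      unfolding im[symmetric] by (rule sum.reindex[OF inj, unfolded comp_def])
    also have "\<dots> = (\<Sum>Z\<in>Pow (B - A). (-1) ^ card A * (-1) ^ card Z)"
    proof (rule sum.cong[OF refl])
      fix Z assume "Z \<in> Pow (B - A)"
      hence "finite Z" "A \<inter> Z = {}" using fB finite_subset by auto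
      thus "(-1::'a) ^ card (A \<union> Z) = (-1) ^ card A * (-1) ^ card Z"
        using fA by (simp add: card_Un_disjoint power_add)
    qed
    also have "\<dots> = (-1) ^ card A * (-1 + 1) ^ card (B - A)"
      by (simp add: sum_distrib_left[symmetric] pow_sum fB)
    also have "\<dots> = (if A = B then (-1) ^ card A else 0)"
    proof -
      have "card (B - A) = 0 \<longleftrightarrow> A = B" using fB True by (auto simp: card_eq_0_iff)
      thus ?thesis by (simp add: power_0_left)
    qed
    finally show ?thesis .
  qed
  finally show ?thesis .
qed


lemma cycle_lemma:
  assumes sp: "signed_poset P" and ne: "E P \<noteq> {}"
  shows "sinks_set P \<noteq> sources_set P"
proof
  assume eq: "sinks_set P = sources_set P"
  have o: "is_orientation P" and nc: "\<nexists>n vs es. is_cycle P n vs es" using sp unfolding signed_poset_def by auto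
  have fV: "finite (V P)" using o by (rule is_orientation_fin)
  define endp where "endp w \<longleftrightarrow> (\<exists>e\<in>E P. fst (ends P e) = w \<or> snd (ends P e) = w)" for w
  have endpV: "w \<in> V P" if "endp w" for w using that o unfolding endp_def is_orientation_def by auto
  have inout: "(\<exists>e\<in>E P. arrow_in P e w) \<and> (\<exists>e\<in>E P. arrow_out P e w)" if ew: "endp w" for w
  proof (rule ccontr)
    assume "\<not> ?thesis"
    then consider "\<forall>e\<in>E P. \<not> arrow_in P e w" | "\<forall>e\<in>E P. \<not> arrow_out P e w" by blast
    hence "w \<in> sinks_set P \<and> w \<in> sources_set P"
    proof cases
      case 1
      hence "w \<in> sources_set P" using endpV[OF ew]
        unfolding sources_set_def is_source_def arrow_in_def by auto
      thus ?thesis using eq by simp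
    next
      case 2
      hence "w \<in> sinks_set P" using endpV[OF ew]
        unfolding sinks_set_def is_sink_def arrow_out_def by auto
      thus ?thesis using eq by simp
    qed
    thus False using ew unfolding endp_def sinks_set_def sources_set_def is_sink_def is_source_def by auto
  qed
  define ch where "ch = (\<lambda>(w::nat, b::bool). SOME e. e \<in> E P \<and> (if b then arrow_out P e w else arrow_in P e w))"
  define nxt where "nxt = (\<lambda>(w::nat, b::bool). (let e = ch (w,b) in
      if fst (ends P e) = w \<and> fst (ori P e) = (\<not> b) then (snd (ends P e), snd (ori P e))
      else (fst (ends P e), fst (ori P e))))"
  obtain e0 where e0: "e0 \<in> E P" using ne by auto
  define w0 where "w0 = fst (ends P e0)"
  have ew0: "endp w0" unfolding endp_def w0_def using e0 by auto
  define st where "st = (\<lambda>i. (nxt ^^ i) (w0, True))"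
  have stS: "st (Suc i) = nxt (st i)" for i unfolding st_def by simp
  have chprop: "ch (w,b) \<in> E P \<and> (if b then arrow_out P (ch (w,b)) w else arrow_in P (ch (w,b)) w)"
    if "endp w" for w b
  proof -
    have "\<exists>e. e \<in> E P \<and> (if b then arrow_out P e w else arrow_in P e w)" using inout[OF that] by auto
    thus ?thesis unfolding ch_def case_prod_conv by (rule someI_ex)
  qed
  have step: "ends P (ch (w,b)) = (w, fst (nxt (w,b))) \<or> ends P (ch (w,b)) = (fst (nxt (w,b)), w)"
    "if snd (nxt (w,b)) then arrow_in P (ch (w,b)) (fst (nxt (w,b))) else arrow_out P (ch (w,b)) (fst (nxt (w,b)))"
    "endp (fst (nxt (w,b)))"
    if "endp w" for w b
  proof -
    let ?e = "ch (w,b)"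
    have c: "?e \<in> E P" "if b then arrow_out P ?e w else arrow_in P ?e w" using chprop[OF that] by auto
    show "ends P ?e = (w, fst (nxt (w,b))) \<or> ends P ?e = (fst (nxt (w,b)), w)"
      "if snd (nxt (w,b)) then arrow_in P ?e (fst (nxt (w,b))) else arrow_out P ?e (fst (nxt (w,b)))"
    proof -
      show "ends P ?e = (w, fst (nxt (w,b))) \<or> ends P ?e = (fst (nxt (w,b)), w)"
      proof (cases "fst (ends P ?e) = w \<and> fst (ori P ?e) = (\<not> b)")
        case True
        hence "nxt (w,b) = (snd (ends P ?e), snd (ori P ?e))" unfolding nxt_def Let_def by simp
        thus ?thesis using True by (metis fst_conv prod.collapse)
      next
        case False
        hence nx: "nxt (w,b) = (fst (ends P ?e), fst (ori P ?e))" unfolding nxt_def Let_def by auto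
        have "snd (ends P ?e) = w" using c(2) False unfolding arrow_in_def arrow_out_def by (cases b) auto
        thus ?thesis using nx by (metis fst_conv prod.collapse)
      qed
      show "if snd (nxt (w,b)) then arrow_in P ?e (fst (nxt (w,b))) else arrow_out P ?e (fst (nxt (w,b)))"
        unfolding nxt_def Let_def arrow_in_def arrow_out_def by auto
    qed
    show "endp (fst (nxt (w,b)))" unfolding endp_def using c(1) unfolding nxt_def Let_def
      by (auto intro!: bexI[of _ ?e])
  qed
  have endst: "endp (fst (st i))" for i
  proof (induction i)
    case 0 thus ?case using ew0 unfolding st_def by simp
  next
    case (Suc i)
    thus ?case unfolding stS using step(3)[of "fst (st i)" "snd (st i)"] by simp
  qed
  have F: "ch (st i) \<in> E P"
    "if snd (st i) then arrow_out P (ch (st i)) (fst (st i)) else arrow_in P (ch (st i)) (fst (st i))"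
    "ends P (ch (st i)) = (fst (st i), fst (st (Suc i))) \<or> ends P (ch (st i)) = (fst (st (Suc i)), fst (st i))"
    "if snd (st (Suc i)) then arrow_in P (ch (st i)) (fst (st (Suc i))) else arrow_out P (ch (st i)) (fst (st (Suc i)))"
    for i
  proof -
    obtain w b where sb: "st i = (w,b)" by (cases "st i") auto
    have ew: "endp w" using endst[of i] sb by simp
    have X: "ch (w,b) \<in> E P \<and> (if b then arrow_out P (ch (w,b)) w else arrow_in P (ch (w,b)) w)"
      by (rule chprop[OF ew])
    have Y: "ends P (ch (w,b)) = (w, fst (nxt (w,b))) \<or> ends P (ch (w,b)) = (fst (nxt (w,b)), w)"
      "if snd (nxt (w,b)) then arrow_in P (ch (w,b)) (fst (nxt (w,b))) else arrow_out P (ch (w,b)) (fst (nxt (w,b)))"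
      by (rule step(1)[OF ew], rule step(2)[OF ew])
    show "ch (st i) \<in> E P" unfolding sb using X by simp
    show "if snd (st i) then arrow_out P (ch (st i)) (fst (st i)) else arrow_in P (ch (st i)) (fst (st i))"
      unfolding sb using X by (cases b) simp_all
    show "ends P (ch (st i)) = (fst (st i), fst (st (Suc i))) \<or> ends P (ch (st i)) = (fst (st (Suc i)), fst (st i))"
      unfolding stS sb using Y by simp
    show "if snd (st (Suc i)) then arrow_in P (ch (st i)) (fst (st (Suc i))) else arrow_out P (ch (st i)) (fst (st (Suc i)))"
      unfolding stS sb using Y by (cases "snd (nxt (w,b))") simp_all
  qed
  have "\<not> inj st"
  proof
    assume ist: "inj st"
    have "range st \<subseteq> V P \<times> UNIV"
    proof
      fix x assume "x \<in> range st"
      then obtain i where "x = st i" by auto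
      thus "x \<in> V P \<times> UNIV" using endpV[OF endst[of i]] by (simp add: mem_Times_iff)
    qed
    moreover have "finite (V P \<times> (UNIV :: bool set))" using fV by simp
    ultimately have "finite (range st)" by (rule finite_subset)
    hence "finite (UNIV :: nat set)" using finite_imageD ist by blast
    thus False by simp
  qed
  then obtain i j where ij: "i < j" "st i = st j" unfolding inj_def by (metis linorder_neqE_nat)
  define n where "n = j - i"
  define vs where "vs = (\<lambda>l. fst (st (i + l)))"
  define es where "es = (\<lambda>l. ch (st (i + l)))"
  have "is_cycle P n vs es"
    unfolding is_cycle_def
  proof (intro conjI ballI allI impI)
    show "1 \<le> n" using ij n_def by simp
    show "vs n = vs 0" using ij n_def vs_def by simp
  next
    fix l assume "l < n"
    show "es l \<in> E P" using F(1) es_def by simp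
    show "ends P (es l) = (vs l, vs (Suc l)) \<or> ends P (es l) = (vs (Suc l), vs l)"
      using F(3)[of "i + l"] es_def vs_def by simp
  next
    fix w assume "w \<in> vs ` {..<n}"
    then obtain l where l: "l < n" "w = vs l" by auto
    obtain l' where l': "l' < n" "st (i + Suc l') = st (i + l)"
    proof (cases l)
      case 0
      show ?thesis by (rule that[of "n - 1"]) (use ij n_def 0 in auto)
    next
      case (Suc m)
      show ?thesis by (rule that[of m]) (use l Suc in auto)
    qed
    have A: "if snd (st (i + l)) then arrow_out P (es l) w else arrow_in P (es l) w"
      using F(2)[of "i + l"] l es_def vs_def by simp
    have B: "if snd (st (i + l)) then arrow_in P (es l') w else arrow_out P (es l') w"
    proof -
      have st_eq: "st (Suc (i + l')) = st (i + l)" using l'(2) by simp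
      show ?thesis using F(4)[of "i + l'"] unfolding st_eq es_def vs_def l(2) by simp
    qed
    have "es l \<in> es ` {..<n}" "es l' \<in> es ` {..<n}" using l l' by auto
    thus "\<exists>e\<in>es ` {..<n}. arrow_in P e w" "\<exists>e\<in>es ` {..<n}. arrow_out P e w"
      using A B by (cases "snd (st (i + l))"; auto)+
  qed
  thus False using nc by blast
qed


lemma restr_signed_poset:
  assumes "signed_poset P" "W \<subseteq> V P"
  shows "signed_poset (restr P W)"
proof -
  have "is_cycle P n vs es" if "is_cycle (restr P W) n vs es" for n vs es
    using that unfolding is_cycle_def arrow_in_def arrow_out_def by auto
  thus ?thesis using assms restr_orient unfolding signed_poset_def by blast
qed

definition wE :: "nat set \<Rightarrow> (nat \<Rightarrow> int) \<Rightarrow> rat poly" where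
  "wE W k = (-1) ^ (nat (topc W k) + card W)"

lemma Pairs_split:
  assumes "pr \<in> Pairs P"
  shows "fst pr \<subseteq> V P" "snd pr \<subseteq> V P" "fst pr \<inter> snd pr = {}" "fst pr \<union> snd pr \<noteq> {}"
    "fst pr \<subseteq> sinks_set P" "snd pr \<subseteq> sources_set P"
  using assms unfolding Pairs_def sinks_set_def sources_set_def by auto

lemma card_split:
  assumes f: "finite (V P)" and "Sp \<subseteq> V P" "Sm \<subseteq> V P" "Sp \<inter> Sm = {}"
  shows "card (V P) = card (V P - Sp - Sm) + card Sp + card Sm"
proof -
  have fSp: "finite Sp" using finite_subset[OF assms(2) assms(1)] .
  have fSm: "finite Sm" using finite_subset[OF assms(3) assms(1)] .
  have e: "V P = ((V P - Sp - Sm) \<union> Sp) \<union> Sm" using assms by auto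
  have "card (((V P - Sp - Sm) \<union> Sp) \<union> Sm) = card ((V P - Sp - Sm) \<union> Sp) + card Sm"
    by (rule card_Un_disjoint) (use f fSp fSm assms in auto)
  moreover have "card ((V P - Sp - Sm) \<union> Sp) = card (V P - Sp - Sm) + card Sp"
    by (rule card_Un_disjoint) (use f fSp in auto)
  ultimately show ?thesis using e by simp
qed

lemma Pairs_sum_alt:
  assumes o: "is_orientation P"
  shows "(\<Sum>pr\<in>Pairs P. (-1::rat poly) ^ (card (fst pr) + card (snd pr))) =
         (if sinks_set P = sources_set P then (-1) ^ card (sinks_set P) else 0) - 1"
proof -
  have f: "finite (V P)" using o by (rule is_orientation_fin)
  have fA: "finite (sinks_set P)" "finite (sources_set P)"
    using f unfolding sinks_set_def sources_set_def by auto
  have PA: "PairsAll (sinks_set P) (sources_set P) = insert ({},{}) (Pairs P)"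
    unfolding PairsAll_def Pairs_def by auto
  have nin: "({},{}) \<notin> Pairs P" unfolding Pairs_def by auto
  have fP: "finite (Pairs P)" using o by (rule Pairs_finite)
  have "(if sinks_set P = sources_set P then (-1) ^ card (sinks_set P) else 0) =
        (\<Sum>pr\<in>PairsAll (sinks_set P) (sources_set P). (-1::rat poly) ^ (card (fst pr) + card (snd pr)))"
    by (rule PairsAll_alt[symmetric]) (use fA in auto)
  also have "\<dots> = 1 + (\<Sum>pr\<in>Pairs P. (-1::rat poly) ^ (card (fst pr) + card (snd pr)))"
    unfolding PA using nin fP by simp
  finally show ?thesis by simp
qed

lemma E_one:
  assumes "signed_poset P"
  shows "(\<Sum>k\<in>KK P. wE (V P) k) = 1"
  using assms
proof (induction "card (V P)" arbitrary: P rule: less_induct)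
  case less
  have o: "is_orientation P" using less(2) unfolding signed_poset_def by auto
  have f: "finite (V P)" using o by (rule is_orientation_fin)
  let ?z = "\<lambda>v. if v \<in> V P then 0 else (undefined::int)"
  have tz: "topc (V P) ?z = 0"
    using topc_le[OF f, of ?z 0] topc_nonneg[OF f, of ?z] by simp
  have inner: "(\<Sum>k'\<in>KK (restr P (V P - fst pr - snd pr)).
         wE (V P) (extc (fst pr) (snd pr) (topc (V P - fst pr - snd pr) k' + 1) k')) =
         - ((-1) ^ (card (fst pr) + card (snd pr)))" if pr: "pr \<in> Pairs P" for pr
  proof -
    obtain Sp Sm where pe: "pr = (Sp,Sm)" by (metis prod.collapse)
    let ?W = "V P - Sp - Sm"
    have prr: "(Sp,Sm) \<in> Pairs P" using pr pe by simp
    note PS = Pairs_split[OF prr, simplified]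
    have cV: "card (V P) = card ?W + card Sp + card Sm" by (rule card_split) (use f PS in auto)
    have lt: "card ?W < card (V P)"
    proof -
      have "card Sp + card Sm > 0" using PS f finite_subset by (metis add_gr_0 card_gt_0_iff sup_eq_bot_iff)
      thus ?thesis using cV by simp
    qed
    have sp: "signed_poset (restr P ?W)" by (rule restr_signed_poset[OF less(2)]) auto
    have IH: "(\<Sum>k\<in>KK (restr P ?W). wE ?W k) = 1"
      using less(1)[OF _ sp] lt by simp
    have "(\<Sum>k'\<in>KK (restr P ?W). wE (V P) (extc Sp Sm (topc ?W k' + 1) k')) =
          (\<Sum>k'\<in>KK (restr P ?W). - ((-1) ^ (card Sp + card Sm)) * wE ?W k')"
    proof (rule sum.cong[OF refl])
      fix k' assume k': "k' \<in> KK (restr P ?W)"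
      note E = ext_part[OF o prr refl k' refl]
      have nn: "0 \<le> topc ?W k'" using topc_nonneg f by simp
      have "nat (topc ?W k' + 1) = Suc (nat (topc ?W k'))" using nn by simp
      thus "wE (V P) (extc Sp Sm (topc ?W k' + 1) k') = - ((-1) ^ (card Sp + card Sm)) * wE ?W k'"
        unfolding wE_def E(2) cV by (simp add: power_add algebra_simps)
    qed
    also have "\<dots> = - ((-1) ^ (card Sp + card Sm)) * (\<Sum>k'\<in>KK (restr P ?W). wE ?W k')"
      by (rule sum_distrib_left[symmetric])
    also have "\<dots> = - ((-1) ^ (card Sp + card Sm))" unfolding IH by simp
    finally show ?thesis using pe by simp
  qed
  have "(\<Sum>k\<in>KK P. wE (V P) k) = (if E P = {} then wE (V P) ?z else 0) +
        (\<Sum>pr\<in>Pairs P. - ((-1) ^ (card (fst pr) + card (snd pr))))"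
    unfolding decomp[OF o] using inner by (simp cong: sum.cong)
  also have "\<dots> = (if E P = {} then (-1) ^ card (V P) else 0) + 1 -
       (if sinks_set P = sources_set P then (-1) ^ card (sinks_set P) else 0)"
    unfolding sum_negf Pairs_sum_alt[OF o] wE_def tz by simp
  also have "\<dots> = 1"
  proof (cases "E P = {}")
    case True
    hence "sinks_set P = V P" "sources_set P = V P"
      unfolding sinks_set_def sources_set_def is_sink_def is_source_def by auto
    thus ?thesis using True by simp
  next
    case False
    thus ?thesis using cycle_lemma[OF less(2) False] by simp
  qed
  finally show ?case .
qed

definition wT :: "nat set \<Rightarrow> (nat \<Rightarrow> int) \<Rightarrow> rat poly" where
  "wT W k = (if topc W k \<ge> 1 \<and> (\<forall>v\<in>W. k v \<noteq> - topc W k)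
     then [:-1,1:] ^ card {v\<in>W. k v = topc W k} * (-1) ^ (nat (topc W k) - 1 + (card W - card {v\<in>W. k v = topc W k}))
     else 0)"

lemma pp: "[:-1,1:] + 1 = ([:0,1:] :: rat poly)" by (simp add: one_pCons)

lemma T_val:
  assumes sp: "signed_poset P"
  shows "(\<Sum>k\<in>KK P. wT (V P) k) = [:0,1:] ^ card (sinks_set P) - 1"
proof -
  have o: "is_orientation P" using sp unfolding signed_poset_def by auto
  have f: "finite (V P)" using o by (rule is_orientation_fin)
  let ?z = "\<lambda>v. if v \<in> V P then 0 else (undefined::int)"
  have tz: "topc (V P) ?z = 0"
    using topc_le[OF f, of ?z 0] topc_nonneg[OF f, of ?z] by simp
  have inner: "(\<Sum>k'\<in>KK (restr P (V P - fst pr - snd pr)).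
         wT (V P) (extc (fst pr) (snd pr) (topc (V P - fst pr - snd pr) k' + 1) k')) =
         (if snd pr = {} then [:-1,1:] ^ card (fst pr) else 0)" if pr: "pr \<in> Pairs P" for pr
  proof -
    obtain Sp Sm where pe: "pr = (Sp,Sm)" by (metis prod.collapse)
    let ?W = "V P - Sp - Sm"
    have prr: "(Sp,Sm) \<in> Pairs P" using pr pe by simp
    note PS = Pairs_split[OF prr, simplified]
    have cV: "card (V P) = card ?W + card Sp + card Sm" by (rule card_split) (use f PS in auto)
    have spr: "signed_poset (restr P ?W)" by (rule restr_signed_poset[OF sp]) auto
    have E1: "(\<Sum>k\<in>KK (restr P ?W). wE ?W k) = 1" using E_one[OF spr] by simp
    have "(\<Sum>k'\<in>KK (restr P ?W). wT (V P) (extc Sp Sm (topc ?W k' + 1) k')) =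
          (\<Sum>k'\<in>KK (restr P ?W). (if Sm = {} then [:-1,1:] ^ card Sp else 0) * wE ?W k')"
    proof (rule sum.cong[OF refl])
      fix k' assume k': "k' \<in> KK (restr P ?W)"
      note E = ext_part[OF o prr refl k' refl]
      have nn: "0 \<le> topc ?W k'" using topc_nonneg f by simp
      have n1: "nat (topc ?W k' + 1) - 1 = nat (topc ?W k')" using nn by simp
      have ex: "(\<forall>v\<in>V P. extc Sp Sm (topc ?W k' + 1) k' v \<noteq> - (topc ?W k' + 1)) \<longleftrightarrow> Sm = {}"
        using E(4) by auto
      have cW: "card (V P) - card Sp = card ?W" if "Sm = {}" using cV that by simp
      show "wT (V P) (extc Sp Sm (topc ?W k' + 1) k') = (if Sm = {} then [:-1,1:] ^ card Sp else 0) * wE ?W k'"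
        unfolding wT_def E(2) E(3) ex n1 wE_def using nn cW by simp
    qed
    also have "\<dots> = (if Sm = {} then [:-1,1:] ^ card Sp else 0) * (\<Sum>k'\<in>KK (restr P ?W). wE ?W k')"
      by (rule sum_distrib_left[symmetric])
    also have "\<dots> = (if Sm = {} then [:-1,1:] ^ card Sp else 0)" unfolding E1 by simp
    finally show ?thesis using pe by simp
  qed
  have "(\<Sum>k\<in>KK P. wT (V P) k) = (\<Sum>pr\<in>Pairs P. (if snd pr = {} then [:-1,1:] ^ card (fst pr) else 0))"
    unfolding decomp[OF o] using inner by (simp add: wT_def tz cong: sum.cong)
  also have "\<dots> = (\<Sum>pr\<in>{pr\<in>Pairs P. snd pr = {}}. [:-1,1:] ^ card (fst pr))"
    by (rule sum.inter_filter[symmetric]) (rule Pairs_finite[OF o])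
  also have "\<dots> = (\<Sum>S\<in>Pow (sinks_set P) - {{}}. [:-1,1:] ^ card S)"
    by (rule sum.reindex_bij_witness[where j = "fst :: nat set \<times> nat set \<Rightarrow> nat set" and i = "\<lambda>S. (S, {} :: nat set)"])
       (auto simp: Pairs_def)
  also have "\<dots> = (\<Sum>S\<in>Pow (sinks_set P). [:-1,1:] ^ card S) - 1"
  proof -
    have fs: "finite (Pow (sinks_set P))" using f unfolding sinks_set_def by simp
    have "(\<Sum>S\<in>Pow (sinks_set P). [:-1,1:] ^ card S) = 1 + (\<Sum>S\<in>Pow (sinks_set P) - {{}}. ([:-1,1:] :: rat poly) ^ card S)"
      using sum.remove[OF fs, of "{}" "\<lambda>S. ([:-1,1:] :: rat poly) ^ card S"] by simp
    thus ?thesis by (simp add: eq_diff_eq add.commute)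
  qed
  also have "\<dots> = [:0,1:] ^ card (sinks_set P) - 1"
    using pp pow_sum[of "sinks_set P" "[:-1,1:] :: rat poly"] f unfolding sinks_set_def by simp
  finally show ?thesis .
qed


definition colcont :: "nat set \<Rightarrow> (nat \<Rightarrow> int) \<Rightarrow> int multiset" where
  "colcont W k = image_mset k (mset_set W)"

definition topm :: "int multiset \<Rightarrow> int" where
  "topm m = Max (insert 0 (abs ` set_mset m))"

definition comprm :: "int multiset \<Rightarrow> bool" where
  "comprm m \<longleftrightarrow> (\<forall>j. 1 \<le> j \<and> j \<le> topm m \<longrightarrow> j \<in># m \<or> - j \<in># m)"

definition cm :: "int multiset \<Rightarrow> rat poly" where
  "cm m = (if comprm m then (-1) ^ (nat (topm m) + size m) +
      (if topm m \<ge> 1 \<and> - topm m \<notin># m then [:-1,1:] ^ count m (topm m) * (-1) ^ (nat (topm m) - 1 + (size m - count m (topm m))) else 0)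
     else 0)"

definition MS :: "nat \<Rightarrow> int multiset set" where
  "MS D = mset ` {xs. set xs \<subseteq> {- int D .. int D} \<and> length xs \<le> D}"

definition Phi :: "nat \<Rightarrow> fps_Z \<Rightarrow> rat poly" where
  "Phi D f = (\<Sum>m\<in>MS D. smult (f m) (cm m))"

lemma MS_finite: "finite (MS D)"
  unfolding MS_def by (intro finite_imageI finite_lists_length_le) auto

lemma colcont_facts:
  assumes "finite W"
  shows "set_mset (colcont W k) = k ` W" "size (colcont W k) = card W"
    "count (colcont W k) j = card {v\<in>W. k v = j}"
proof -
  show "set_mset (colcont W k) = k ` W" unfolding colcont_def using assms by simp
  show "size (colcont W k) = card W" unfolding colcont_def by simp
  have "count (colcont W k) j = (\<Sum>y\<in>k -` {j} \<inter> W. 1)"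
    unfolding colcont_def count_image_mset using assms by (intro sum.cong) auto
  also have "\<dots> = card {v\<in>W. k v = j}" by (simp add: Int_commute vimage_def Collect_conj_eq)
  finally show "count (colcont W k) j = card {v\<in>W. k v = j}" .
qed

lemma topm_colcont: "finite W \<Longrightarrow> topm (colcont W k) = topc W k"
  unfolding topm_def topc_def colcont_facts(1)[of W k] by (simp add: image_image)

lemma comprm_colcont: "finite W \<Longrightarrow> comprm (colcont W k) \<longleftrightarrow> compr W k"
proof -
  assume f: "finite W"
  have "(j \<in># colcont W k \<or> - j \<in># colcont W k) \<longleftrightarrow> (\<exists>v\<in>W. \<bar>k v\<bar> = j)" if "1 \<le> j" for j
  proof -
    have st: "set_mset (colcont W k) = k ` W" by (rule colcont_facts(1)[OF f])
    show ?thesis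
    proof
      assume "j \<in># colcont W k \<or> - j \<in># colcont W k"
      then obtain v where "v \<in> W" "k v = j \<or> k v = - j" unfolding st by auto
      thus "\<exists>v\<in>W. \<bar>k v\<bar> = j" using that by (intro bexI[of _ v]) auto
    next
      assume "\<exists>v\<in>W. \<bar>k v\<bar> = j"
      then obtain v where v: "v \<in> W" "\<bar>k v\<bar> = j" by auto
      hence "k v = j \<or> k v = - j" by (auto simp: abs_if split: if_splits)
      thus "j \<in># colcont W k \<or> - j \<in># colcont W k" unfolding st using imageI[OF v(1), of k] by metis
    qed
  qed
  thus ?thesis unfolding comprm_def compr_def topm_colcont[OF f] by auto
qed

lemma cm_colcont:
  assumes f: "finite W" and c: "compr W k"
  shows "cm (colcont W k) = wE W k + wT W k"
proof -
  have ex: "(- topc W k \<notin># colcont W k) \<longleftrightarrow> (\<forall>v\<in>W. k v \<noteq> - topc W k)"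
    using colcont_facts(1)[OF f, of k] by (force simp: image_iff)
  show ?thesis unfolding cm_def wE_def wT_def comprm_colcont[OF f] topm_colcont[OF f]
      colcont_facts(2,3)[OF f] ex using c by simp
qed

lemma cm_colcont0:
  assumes f: "finite W" and c: "\<not> compr W k"
  shows "cm (colcont W k) = 0"
  unfolding cm_def comprm_colcont[OF f] using c by simp

lemma Phi_Y:
  assumes sp: "signed_poset P" and D: "card (V P) \<le> D"
  shows "Phi D (Y P) = [:0,1:] ^ sinks P"
proof -
  have o: "is_orientation P" using sp unfolding signed_poset_def by auto
  have f: "finite (V P)" using o by (rule is_orientation_fin)
  define Col where "Col = {k \<in> V P \<rightarrow>\<^sub>E UNIV. proper_col P k \<and> preserves P k}"
  define S where "S = {k\<in>Col. colcont (V P) k \<in> MS D}"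
  have Yeq: "Y P m = of_nat (card {k\<in>Col. colcont (V P) k = m})" for m
    unfolding Y_def Col_def colcont_def by (simp add: conj_assoc)
  have fS: "finite S"
  proof -
    have "S \<subseteq> V P \<rightarrow>\<^sub>E {- int D .. int D}"
    proof
      fix k assume "k \<in> S"
      hence k: "k \<in> V P \<rightarrow>\<^sub>E UNIV" "colcont (V P) k \<in> MS D" unfolding S_def Col_def by auto
      then obtain xs where xs: "colcont (V P) k = mset xs" "set xs \<subseteq> {- int D .. int D}" unfolding MS_def by auto
      have "k ` V P \<subseteq> {- int D .. int D}" using xs colcont_facts(1)[OF f, of k]
        by (metis set_mset_mset)
      thus "k \<in> V P \<rightarrow>\<^sub>E {- int D .. int D}" using k(1) by (auto simp: PiE_def Pi_def)
    qed
    moreover have "finite (V P \<rightarrow>\<^sub>E {- int D .. int D})" using f by (intro finite_PiE) auto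
    ultimately show ?thesis by (rule finite_subset)
  qed
  have "Phi D (Y P) = (\<Sum>m\<in>MS D. \<Sum>k\<in>{k\<in>S. colcont (V P) k = m}. cm (colcont (V P) k))"
    unfolding Phi_def
  proof (rule sum.cong[OF refl])
    fix m assume m: "m \<in> MS D"
    have e: "{k\<in>S. colcont (V P) k = m} = {k\<in>Col. colcont (V P) k = m}" unfolding S_def using m by auto
    show "smult (Y P m) (cm m) = (\<Sum>k\<in>{k\<in>S. colcont (V P) k = m}. cm (colcont (V P) k))"
      unfolding e Yeq by (simp add: of_nat_mult_conv_smult[symmetric])
  qed
  also have "\<dots> = (\<Sum>k\<in>S. cm (colcont (V P) k))"
    by (rule sum.group[OF fS MS_finite]) (auto simp: S_def)
  also have "\<dots> = (\<Sum>k\<in>KK P. cm (colcont (V P) k))"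
  proof (rule sum.mono_neutral_right[OF fS])
    show "KK P \<subseteq> S"
    proof
      fix k assume k: "k \<in> KK P"
      hence c: "compr (V P) k" unfolding KK_def by auto
      have bd: "k ` V P \<subseteq> {- int D .. int D}"
      proof
        fix x assume "x \<in> k ` V P"
        then obtain v where v: "v \<in> V P" "x = k v" by auto
        have "\<bar>k v\<bar> \<le> int D" using topc_ge[OF f v(1), of k] compr_bound[OF f c] D by linarith
        thus "x \<in> {- int D .. int D}" using v by auto
      qed
      have "colcont (V P) k = mset (map k (sorted_list_of_set (V P)))"
        unfolding colcont_def by (metis mset_map mset_sorted_list_of_multiset sorted_list_of_mset_set)
      moreover have "set (map k (sorted_list_of_set (V P))) \<subseteq> {- int D .. int D}" using bd f by auto
      moreover have "length (map k (sorted_list_of_set (V P))) \<le> D" using D by simp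
      ultimately have "colcont (V P) k \<in> MS D" unfolding MS_def by blast
      thus "k \<in> S" using k unfolding S_def Col_def KK_def by auto
    qed
    show "\<forall>k\<in>S - KK P. cm (colcont (V P) k) = 0"
      using cm_colcont0[OF f] unfolding S_def Col_def KK_def by auto
  qed
  also have "\<dots> = (\<Sum>k\<in>KK P. wE (V P) k + wT (V P) k)"
    by (rule sum.cong[OF refl]) (use cm_colcont[OF f] in \<open>auto simp: KK_def\<close>)
  also have "\<dots> = [:0,1:] ^ sinks P"
    unfolding sum.distrib E_one[OF sp] T_val[OF sp] sinks_def sinks_set_def by simp
  finally show ?thesis .
qed

lemma smult_sum_right: "smult a (\<Sum>i\<in>S. f i) = (\<Sum>i\<in>S. smult a (f i))"
  by (induct S rule: infinite_finite_induct) (auto simp: smult_add_right)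

lemma Phi_list:
  "(\<Sum>m\<in>MS D. smult (\<Sum>(c, P)\<leftarrow>cs. c * Y P m) (cm m)) = (\<Sum>(c, P)\<leftarrow>cs. smult c (Phi D (Y P)))"
proof (induction cs)
  case Nil thus ?case by simp
next
  case (Cons x cs)
  obtain c P where x: "x = (c,P)" by (cases x)
  have "(\<Sum>m\<in>MS D. smult (\<Sum>(c, P)\<leftarrow>x # cs. c * Y P m) (cm m)) =
        (\<Sum>m\<in>MS D. smult c (smult (Y P m) (cm m))) + (\<Sum>m\<in>MS D. smult (\<Sum>(c, P)\<leftarrow>cs. c * Y P m) (cm m))"
    unfolding x by (simp add: smult_add_left sum.distrib)
  also have "(\<Sum>m\<in>MS D. smult c (smult (Y P m) (cm m))) = smult c (Phi D (Y P))"
    unfolding Phi_def smult_sum_right ..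
  finally show ?case using Cons x by simp
qed

lemma Phi_repr:
  assumes "represents cs f"
  shows "Phi D f = (\<Sum>(c, P)\<leftarrow>cs. smult c (Phi D (Y P)))"
proof -
  have "f = (\<lambda>m. \<Sum>(c, P)\<leftarrow>cs. c * Y P m)" using assms unfolding represents_def by auto
  hence "Phi D f = (\<Sum>m\<in>MS D. smult (\<Sum>(c, P)\<leftarrow>cs. c * Y P m) (cm m))" unfolding Phi_def by simp
  thus ?thesis using Phi_list by simp
qed


lemma rep_inj: "a \<ge> 1 \<Longrightarrow> replicate_mset a i = replicate_mset a j \<Longrightarrow> i = j"
proof -
  assume a: "a \<ge> 1" and e: "replicate_mset a i = replicate_mset a j"
  have "i \<in># replicate_mset a i" using a by simp
  hence "i \<in># replicate_mset a j" using e by simp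
  thus "i = j" using a by (simp split: if_splits)
qed

lemma set_rep: "a \<ge> 1 \<Longrightarrow> set_mset (replicate_mset a i) = {i}"
  by auto

lemma cm_rep:
  assumes a: "a \<ge> 1"
  shows "cm (replicate_mset a i) = (if i = 0 then (-1) ^ a else if i = 1 then - ((-1) ^ a) + [:-1,1:] ^ a
     else if i = -1 then - ((-1) ^ a) else 0)"
proof -
  have st: "set_mset (replicate_mset a i) = {i}" using a by auto
  have tp: "topm (replicate_mset a i) = \<bar>i\<bar>" unfolding topm_def st by simp
  have cpr: "comprm (replicate_mset a i) \<longleftrightarrow> \<bar>i\<bar> \<le> 1"
  proof
    assume c: "comprm (replicate_mset a i)"
    show "\<bar>i\<bar> \<le> 1"
    proof (rule ccontr)
      assume "\<not> \<bar>i\<bar> \<le> 1"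
      hence "1 \<le> (1::int) \<and> 1 \<le> topm (replicate_mset a i)" using tp by simp
      hence "1 \<in># replicate_mset a i \<or> -1 \<in># replicate_mset a i" using c unfolding comprm_def by blast
      thus False using \<open>\<not> \<bar>i\<bar> \<le> 1\<close> st by auto
    qed
  next
    assume "\<bar>i\<bar> \<le> 1"
    thus "comprm (replicate_mset a i)" unfolding comprm_def tp using st a by (auto simp: abs_if)
  qed
  consider "i = 0" | "i = 1" | "i = -1" | "\<bar>i\<bar> > 1" by linarith
  thus ?thesis
  proof cases
    case 1 thus ?thesis unfolding cm_def using cpr tp a by simp
  next
    case 2 thus ?thesis unfolding cm_def using cpr tp a by (simp add: power_add)
  next
    case 3 thus ?thesis unfolding cm_def using cpr tp a by (simp add: power_add)
  next
    case 4 thus ?thesis unfolding cm_def using cpr by auto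
  qed
qed

lemma p_val: "a \<ge> 1 \<Longrightarrow> p_ab a 0 m = (if m \<in> range (replicate_mset a) then 1 else 0)"
proof -
  assume a: "a \<ge> 1"
  show ?thesis
  proof (cases "m \<in> range (replicate_mset a)")
    case True
    then obtain i0 where m: "m = replicate_mset a i0" by auto
    have "{i. replicate_mset a i + replicate_mset 0 (- i) = m} = {i0}" using rep_inj[OF a] m by auto
    thus ?thesis unfolding p_ab_def using True by simp
  next
    case False
    hence "{i. replicate_mset a i + replicate_mset 0 (- i) = m} = {}" by auto
    thus ?thesis unfolding p_ab_def using False by simp
  qed
qed

lemma Phi_p:
  assumes a: "a \<ge> 1" and D: "a \<le> D"
  shows "Phi D (p_ab a 0) = [:-1,1:] ^ a - [:(-1) ^ a:]"
proof -
  define RD where "RD = replicate_mset a ` {- int D .. int D}"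
  have RDsub: "RD \<subseteq> MS D"
  proof
    fix m assume "m \<in> RD"
    then obtain i where i: "i \<in> {- int D .. int D}" "m = replicate_mset a i" unfolding RD_def by auto
    have "m = mset (replicate a i)" using i by simp
    moreover have "replicate a i \<in> {xs. set xs \<subseteq> {- int D .. int D} \<and> length xs \<le> D}" using i D by auto
    ultimately show "m \<in> MS D" unfolding MS_def by (rule image_eqI)
  qed
  have mem: "m \<in> range (replicate_mset a) \<longleftrightarrow> m \<in> RD" if mm: "m \<in> MS D" for m
  proof
    assume "m \<in> range (replicate_mset a)"
    then obtain i where i: "m = replicate_mset a i" by auto
    obtain xs where xs: "m = mset xs" "set xs \<subseteq> {- int D .. int D}" using mm unfolding MS_def by auto
    have "i \<in># m" using i a by simp
    hence "i \<in> {- int D .. int D}" using xs by auto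
    thus "m \<in> RD" unfolding RD_def using i by auto
  qed (auto simp: RD_def)
  have "Phi D (p_ab a 0) = (\<Sum>m\<in>MS D. if m \<in> RD then cm m else 0)"
    unfolding Phi_def by (rule sum.cong[OF refl]) (simp add: p_val[OF a] mem)
  also have "\<dots> = (\<Sum>m\<in>RD. cm m)"
  proof -
    have "(\<Sum>m\<in>MS D. if m \<in> RD then cm m else 0) = (\<Sum>m\<in>{m\<in>MS D. m \<in> RD}. cm m)"
      by (rule sum.inter_filter[symmetric]) (rule MS_finite)
    moreover have "{m\<in>MS D. m \<in> RD} = RD" using RDsub by auto
    ultimately show ?thesis by simp
  qed
  also have "\<dots> = (\<Sum>i\<in>{- int D .. int D}. cm (replicate_mset a i))"
    unfolding RD_def by (rule sum.reindex[unfolded comp_def]) (use rep_inj[OF a] in \<open>auto simp: inj_on_def\<close>)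
  also have "\<dots> = (\<Sum>i\<in>{-1,0,1}. cm (replicate_mset a i))"
  proof (rule sum.mono_neutral_right)
    show "{-1,0,1} \<subseteq> {- int D .. int D}" using a D by auto
    show "\<forall>i\<in>{- int D .. int D} - {-1,0,1}. cm (replicate_mset a i) = 0"
      using cm_rep[OF a] by auto
  qed simp
  also have "\<dots> = [:-1,1:] ^ a - (-1) ^ a"
    using cm_rep[OF a] by simp
  also have "(-1::rat poly) ^ a = [:(-1) ^ a:]"
    by (simp add: poly_const_pow[symmetric] one_pCons)
  finally show ?thesis .
qed


definition Pc :: "nat \<Rightarrow> (nat \<Rightarrow> nat) \<Rightarrow> sposet" where
  "Pc a ch = \<lparr>V = {0..<a}, E = {i. i < a - 1 \<and> ch i \<noteq> 0}, ends = (\<lambda>i. (i, Suc i)),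
     sgn = (\<lambda>_. True), ori = (\<lambda>i. if ch i = 1 then (False, True) else (True, False))\<rparr>"

definition sgnc :: "nat \<Rightarrow> (nat \<Rightarrow> nat) \<Rightarrow> rat" where
  "sgnc a ch = (-1) ^ card {i. i < a - 1 \<and> ch i \<noteq> 0}"

definition Qc :: "nat \<Rightarrow> (nat \<Rightarrow> nat) \<Rightarrow> (nat \<Rightarrow> int) \<Rightarrow> bool" where
  "Qc a ch k \<longleftrightarrow> (\<forall>i<a - 1. (ch i = 1 \<longrightarrow> k i < k (Suc i)) \<and> (ch i \<noteq> 0 \<and> ch i \<noteq> 1 \<longrightarrow> k (Suc i) < k i))"

lemma Pc_simps [simp]: "V (Pc a ch) = {0..<a}" "E (Pc a ch) = {i. i < a - 1 \<and> ch i \<noteq> 0}"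
  "ends (Pc a ch) = (\<lambda>i. (i, Suc i))" "sgn (Pc a ch) = (\<lambda>_. True)"
  "ori (Pc a ch) = (\<lambda>i. if ch i = 1 then (False, True) else (True, False))"
  unfolding Pc_def by simp_all

lemma Pc_signed_poset: "signed_poset (Pc a ch)"
proof -
  have o: "is_orientation (Pc a ch)" unfolding is_orientation_def by auto
  have "\<not> is_cycle (Pc a ch) n vs es" for n vs es
  proof
    assume c: "is_cycle (Pc a ch) n vs es"
    hence n: "n \<ge> 1" and cl: "vs n = vs 0"
      and ed: "\<And>l. l < n \<Longrightarrow> es l \<in> E (Pc a ch) \<and> ((es l, Suc (es l)) = (vs l, vs (Suc l)) \<or> (es l, Suc (es l)) = (vs (Suc l), vs l))"
      and io: "\<And>w. w \<in> vs ` {..<n} \<Longrightarrow> (\<exists>e\<in>es ` {..<n}. arrow_in (Pc a ch) e w) \<and> (\<exists>e\<in>es ` {..<n}. arrow_out (Pc a ch) e w)"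
      unfolding is_cycle_def by auto
    define w where "w = Max (vs ` {..<n})"
    have fin: "finite (vs ` {..<n})" by simp
    have "vs 0 \<in> vs ` {..<n}" using n by auto
    hence ne: "vs ` {..<n} \<noteq> {}" by auto
    have wmem: "w \<in> vs ` {..<n}" unfolding w_def using fin ne by (rule Max_in)
    have inS: "vs (Suc l) \<in> vs ` {..<n}" if "l < n" for l
    proof (cases "Suc l < n")
      case True thus ?thesis by blast
    next
      case False hence "Suc l = n" using that by simp
      hence "vs (Suc l) = vs 0" using cl by simp
      moreover have "0 \<in> {..<n}" using n by simp
      ultimately show ?thesis by (metis imageI)
    qed
    have big: "Suc e = w \<and> (arrow_in (Pc a ch) e w \<longleftrightarrow> snd (ori (Pc a ch) e)) \<and>
               (arrow_out (Pc a ch) e w \<longleftrightarrow> \<not> snd (ori (Pc a ch) e))"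
      if e: "e \<in> es ` {..<n}" and ar: "arrow_in (Pc a ch) e w \<or> arrow_out (Pc a ch) e w" for e
    proof -
      obtain l where l: "l < n" "e = es l" using e by auto
      have "Suc e = vs (Suc l) \<or> Suc e = vs l" using ed[OF l(1)] l(2) by auto
      moreover have "vs l \<in> vs ` {..<n}" using l(1) by blast
      ultimately have "Suc e \<in> vs ` {..<n}" using inS[OF l(1)] by metis
      hence "Suc e \<le> w" unfolding w_def by (rule Max_ge[OF fin])
      hence ne: "e \<noteq> w" by simp
      have ai: "arrow_in (Pc a ch) e w \<longleftrightarrow> (Suc e = w \<and> snd (ori (Pc a ch) e))"
        using ne unfolding arrow_in_def by simp
      have ao: "arrow_out (Pc a ch) e w \<longleftrightarrow> (Suc e = w \<and> \<not> snd (ori (Pc a ch) e))"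
        using ne unfolding arrow_out_def by simp
      have "Suc e = w" using ar ai ao by blast
      thus ?thesis using ai ao by blast
    qed
    obtain e1 e2 where e12: "e1 \<in> es ` {..<n}" "arrow_in (Pc a ch) e1 w" "e2 \<in> es ` {..<n}" "arrow_out (Pc a ch) e2 w"
      using io[OF wmem] by blast
    have b1: "Suc e1 = w" "snd (ori (Pc a ch) e1)" using big[of e1] e12 by blast+
    have b2: "Suc e2 = w" "\<not> snd (ori (Pc a ch) e2)" using big[of e2] e12 by blast+
    have "e1 = e2" using b1(1) b2(1) by simp
    thus False using b1(2) b2(2) by simp
  qed
  thus ?thesis using o unfolding signed_poset_def by auto
qed

lemma Y_Pc: "Y (Pc a ch) m = of_nat (card {k \<in> {0..<a} \<rightarrow>\<^sub>E UNIV. image_mset k (mset_set {0..<a}) = m \<and> Qc a ch k})"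
proof -
  have "proper_col (Pc a ch) k \<and> preserves (Pc a ch) k \<longleftrightarrow> Qc a ch k" for k
  proof -
    have sv: "sgnval (Pc a ch) e = 1" for e by (simp add: sgnval_def)
    have pe: "(k e \<noteq> k (Suc e) \<and> ((ch e \<noteq> 1) = (k (Suc e) < k e)) \<and> ((ch e = 1) = (k e < k (Suc e))))
        \<longleftrightarrow> (ch e = 1 \<longrightarrow> k e < k (Suc e)) \<and> (ch e \<noteq> 0 \<and> ch e \<noteq> 1 \<longrightarrow> k (Suc e) < k e)"
      if "ch e \<noteq> 0" for e using that by (cases "ch e = 1") auto
    have "proper_col (Pc a ch) k \<and> preserves (Pc a ch) k \<longleftrightarrow>
       (\<forall>e. e < a - 1 \<and> ch e \<noteq> 0 \<longrightarrow> k e \<noteq> k (Suc e) \<and> ((ch e \<noteq> 1) = (k (Suc e) < k e)) \<and> ((ch e = 1) = (k e < k (Suc e))))"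
      unfolding proper_col_def preserves_def sv by auto
    also have "\<dots> \<longleftrightarrow> Qc a ch k" unfolding Qc_def using pe by auto
    finally show ?thesis .
  qed
  hence "{k \<in> V (Pc a ch) \<rightarrow>\<^sub>E UNIV. proper_col (Pc a ch) k \<and> preserves (Pc a ch) k \<and> image_mset k (mset_set (V (Pc a ch))) = m}
      = {k \<in> {0..<a} \<rightarrow>\<^sub>E UNIV. image_mset k (mset_set {0..<a}) = m \<and> Qc a ch k}" by auto
  thus ?thesis unfolding Y_def by simp
qed

lemma prod_if_const:
  fixes c :: "'a::comm_monoid_mult"
  assumes "finite I"
  shows "(\<Prod>i\<in>I. if P i then 1 else c) = c ^ card {i\<in>I. \<not> P i}"
proof -
  have "(\<Prod>i\<in>{i\<in>I. \<not> P i}. c) = (\<Prod>i\<in>I. if \<not> P i then c else 1)"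
    by (rule prod.inter_filter[OF assms])
  moreover have "(\<Prod>i\<in>I. if P i then 1 else c) = (\<Prod>i\<in>I. if \<not> P i then c else 1)"
    by (rule prod.cong) auto
  ultimately show ?thesis by simp
qed

lemma prod_of_bool:
  assumes "finite I"
  shows "(\<Prod>i\<in>I. (of_bool (P i) :: rat)) = of_bool (\<forall>i\<in>I. P i)"
  using assms by (induction I rule: finite_induct) auto

lemma key_sum:
  fixes k :: "nat \<Rightarrow> int"
  shows "(\<Sum>ch\<in>{0..<a - 1} \<rightarrow>\<^sub>E {0,1,2::nat}. sgnc a ch * of_bool (Qc a ch k)) =
         of_bool (\<forall>i<a - 1. k i = k (Suc i))"
proof -
  define f where "f = (\<lambda>i (c::nat). if c = 0 then (1::rat) else if c = 1 then - of_bool (k i < k (Suc i))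
                        else - of_bool (k (Suc i) < k i))"
  have F1: "(\<Prod>i\<in>{0..<a - 1}. \<Sum>c\<in>{0,1,2}. f i c) = (\<Sum>ch\<in>{0..<a - 1} \<rightarrow>\<^sub>E {0,1,2}. \<Prod>i\<in>{0..<a - 1}. f i (ch i))"
    by (rule prod_sum_PiE) auto
  have F2: "(\<Sum>c\<in>{0,1,2}. f i c) = of_bool (k i = k (Suc i))" for i
    unfolding f_def by auto
  have F3: "(\<Prod>i\<in>{0..<a - 1}. f i (ch i)) = sgnc a ch * of_bool (Qc a ch k)"
    if ch: "ch \<in> {0..<a - 1} \<rightarrow>\<^sub>E {0,1,2}" for ch
  proof -
    have "(\<Prod>i\<in>{0..<a - 1}. f i (ch i)) = (\<Prod>i\<in>{0..<a - 1}. (if ch i = 0 then 1 else -1) *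
          of_bool (ch i = 0 \<or> (ch i = 1 \<and> k i < k (Suc i)) \<or> (ch i = 2 \<and> k (Suc i) < k i)))"
    proof (rule prod.cong[OF refl])
      fix i assume i: "i \<in> {0..<a - 1}"
      from ch have "\<forall>j\<in>{0..<a - 1}. ch j \<in> {0,1,2}" by (simp add: PiE_iff)
      hence "ch i \<in> {0,1,2}" using i by blast
      thus "f i (ch i) = (if ch i = 0 then 1 else -1) *
          of_bool (ch i = 0 \<or> (ch i = 1 \<and> k i < k (Suc i)) \<or> (ch i = 2 \<and> k (Suc i) < k i))"
        unfolding f_def by auto
    qed
    also have "\<dots> = (\<Prod>i\<in>{0..<a - 1}. (if ch i = 0 then 1 else -1)) *
          (\<Prod>i\<in>{0..<a - 1}. of_bool (ch i = 0 \<or> (ch i = 1 \<and> k i < k (Suc i)) \<or> (ch i = 2 \<and> k (Suc i) < k i)))"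
      by (rule prod.distrib)
    also have "(\<Prod>i\<in>{0..<a - 1}. (if ch i = 0 then 1 else -1)) = sgnc a ch"
      unfolding prod_if_const[OF finite_atLeastLessThan] sgnc_def by (simp add: conj_commute)
    also have "(\<Prod>i\<in>{0..<a - 1}. of_bool (ch i = 0 \<or> (ch i = 1 \<and> k i < k (Suc i)) \<or> (ch i = 2 \<and> k (Suc i) < k i)) :: rat)
        = of_bool (Qc a ch k)"
    proof -
      have chv: "ch i = 0 \<or> ch i = 1 \<or> ch i = 2" if "i < a - 1" for i
      proof -
        from ch have "\<forall>j\<in>{0..<a - 1}. ch j \<in> {0,1,2}" by (simp add: PiE_iff)
        hence "ch i \<in> {0,1,2}" using that by simp
        thus ?thesis by simp
      qed
      have "(ch i = 0 \<or> (ch i = 1 \<and> k i < k (Suc i)) \<or> (ch i = 2 \<and> k (Suc i) < k i)) \<longleftrightarrow>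
            ((ch i = 1 \<longrightarrow> k i < k (Suc i)) \<and> (ch i \<noteq> 0 \<and> ch i \<noteq> 1 \<longrightarrow> k (Suc i) < k i))"
        if "i < a - 1" for i using chv[OF that] by auto
      hence "(\<forall>i\<in>{0..<a - 1}. ch i = 0 \<or> (ch i = 1 \<and> k i < k (Suc i)) \<or> (ch i = 2 \<and> k (Suc i) < k i)) \<longleftrightarrow> Qc a ch k"
        unfolding Qc_def by auto
      thus ?thesis unfolding prod_of_bool[OF finite_atLeastLessThan] by (simp only:)
    qed
    finally show ?thesis .
  qed
  have L: "(\<Prod>i\<in>{0..<a - 1}. \<Sum>c\<in>{0,1,2}. f i c) = of_bool (\<forall>i\<in>{0..<a - 1}. k i = k (Suc i))"
    by (simp only: F2 prod_of_bool[OF finite_atLeastLessThan])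
  have R: "(\<Sum>ch\<in>{0..<a - 1} \<rightarrow>\<^sub>E {0,1,2}. \<Prod>i\<in>{0..<a - 1}. f i (ch i)) =
      (\<Sum>ch\<in>{0..<a - 1} \<rightarrow>\<^sub>E {0,1,2::nat}. sgnc a ch * of_bool (Qc a ch k))"
    by (rule sum.cong[OF refl]) (rule F3)
  have e: "(\<forall>i\<in>{0..<a - 1}. k i = k (Suc i)) = (\<forall>i<a - 1. k i = k (Suc i))" by auto
  show ?thesis unfolding R[symmetric] F1[symmetric] L e ..
qed


lemma const_img: "image_mset (\<lambda>v. if v \<in> {0..<a} then i else undefined) (mset_set {0..<(a::nat)}) = replicate_mset a (i::int)"
proof -
  have "image_mset (\<lambda>v. if v \<in> {0..<a} then i else undefined) (mset_set {0..<a}) = image_mset (\<lambda>_. i) (mset_set {0..<a})"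
    by (rule image_mset_cong) simp
  thus ?thesis by (simp add: image_mset_const_eq)
qed

lemma alleq_card:
  assumes a: "a \<ge> 1"
  shows "card {k \<in> {0..<a} \<rightarrow>\<^sub>E (UNIV::int set). image_mset k (mset_set {0..<a}) = m \<and> (\<forall>i<a - 1. k i = k (Suc i))}
         = card {i. replicate_mset a i = m}"
proof -
  let ?c = "\<lambda>i::int. \<lambda>v. if v \<in> {0..<a} then i else undefined"
  have eq: "{k \<in> {0..<a} \<rightarrow>\<^sub>E (UNIV::int set). image_mset k (mset_set {0..<a}) = m \<and> (\<forall>i<a - 1. k i = k (Suc i))}
         = ?c ` {i. replicate_mset a i = m}"
  proof (intro equalityI subsetI)
    fix k assume k: "k \<in> {k \<in> {0..<a} \<rightarrow>\<^sub>E (UNIV::int set). image_mset k (mset_set {0..<a}) = m \<and> (\<forall>i<a - 1. k i = k (Suc i))}"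
    have all: "\<forall>v<a. k v = k 0"
    proof (intro allI impI)
      fix v assume "v < a"
      thus "k v = k 0"
      proof (induction v)
        case 0 thus ?case by simp
      next
        case (Suc v)
        have "\<forall>i<a - 1. k i = k (Suc i)" using k by simp
        moreover have "v < a - 1" using Suc(2) by simp
        ultimately have "k v = k (Suc v)" by blast
        moreover have "k v = k 0" using Suc by simp
        ultimately show ?case by simp
      qed
    qed
    have kc: "k = ?c (k 0)"
    proof
      fix v show "k v = ?c (k 0) v"
      proof (cases "v \<in> {0..<a}")
        case True
        hence "v < a" by simp
        hence "k v = k 0" using all by blast
        thus ?thesis using True by simp
      next
        case False
        hence "k v = undefined" using k by (simp add: PiE_def extensional_def)
        thus ?thesis using False by simp
      qed
    qed
    have "image_mset k (mset_set {0..<a}) = image_mset (?c (k 0)) (mset_set {0..<a})"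
      by (rule arg_cong[where f = "\<lambda>k. image_mset k (mset_set {0..<a})"]) (rule kc)
    also have "\<dots> = replicate_mset a (k 0)" by (rule const_img)
    finally have "replicate_mset a (k 0) = m" using k by simp
    hence "k 0 \<in> {i. replicate_mset a i = m}" by simp
    thus "k \<in> ?c ` {i. replicate_mset a i = m}" by (rule image_eqI[where x = "k 0" and f = ?c, OF kc])
  next
    fix k assume "k \<in> ?c ` {i. replicate_mset a i = m}"
    then obtain i where i: "replicate_mset a i = m" "k = ?c i" by auto
    show "k \<in> {k \<in> {0..<a} \<rightarrow>\<^sub>E (UNIV::int set). image_mset k (mset_set {0..<a}) = m \<and> (\<forall>i<a - 1. k i = k (Suc i))}"
      using i const_img[of a i] by auto
  qed
  have inj: "inj_on ?c {i. replicate_mset a i = m}"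
  proof (rule inj_onI)
    fix i j assume eq: "?c i = ?c j"
    have z: "(0::nat) \<in> {0..<a}" using a by simp
    have "?c i 0 = ?c j 0" using fun_cong[OF eq, of 0] .
    thus "i = j" using z by (simp only: if_True)
  qed
  show ?thesis unfolding eq by (rule card_image[OF inj])
qed

lemma repr_exists:
  assumes a: "a \<ge> 1"
  shows "\<exists>cs. represents cs (p_ab a 0)"
proof -
  define CH where "CH = {0..<a - 1} \<rightarrow>\<^sub>E {0,1,2::nat}"
  have fCH: "finite CH" unfolding CH_def by (intro finite_PiE) auto
  obtain xs where xs: "set xs = CH" "distinct xs" using finite_distinct_list[OF fCH] by auto
  define cs where "cs = map (\<lambda>ch. (sgnc a ch, Pc a ch)) xs"
  have "represents cs (p_ab a 0)"
    unfolding represents_def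
  proof (intro conjI allI)
    show "\<forall>(c, P)\<in>set cs. signed_poset P" unfolding cs_def using Pc_signed_poset by auto
  next
    fix m
    define A where "A = {k \<in> {0..<a} \<rightarrow>\<^sub>E (UNIV::int set). image_mset k (mset_set {0..<a}) = m}"
    have fA: "finite A"
    proof -
      have "A \<subseteq> {0..<a} \<rightarrow>\<^sub>E set_mset m"
      proof
        fix k assume k: "k \<in> A"
        hence "k ` {0..<a} = set_mset m" unfolding A_def by auto
        thus "k \<in> {0..<a} \<rightarrow>\<^sub>E set_mset m" using k unfolding A_def by (auto simp: PiE_def Pi_def)
      qed
      thus ?thesis by (rule finite_subset) (intro finite_PiE; simp)
    qed
    have Yc: "Y (Pc a ch) m = (\<Sum>k\<in>A. of_bool (Qc a ch k))" for ch
    proof -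
      have "{k \<in> {0..<a} \<rightarrow>\<^sub>E UNIV. image_mset k (mset_set {0..<a}) = m \<and> Qc a ch k} = {k\<in>A. Qc a ch k}"
        unfolding A_def by auto
      moreover have "(\<Sum>k\<in>A. (of_bool (Qc a ch k) :: rat)) = of_nat (card {k\<in>A. Qc a ch k})"
        using fA by (simp add: sum.inter_filter[symmetric] Int_def)
      ultimately show ?thesis unfolding Y_Pc by simp
    qed
    have "(\<Sum>(c, P)\<leftarrow>cs. c * Y P m) = (\<Sum>ch\<leftarrow>xs. sgnc a ch * Y (Pc a ch) m)"
      unfolding cs_def by (simp add: comp_def)
    also have "\<dots> = (\<Sum>ch\<in>CH. sgnc a ch * Y (Pc a ch) m)"
      using xs by (simp add: sum_list_distinct_conv_sum_set)
    also have "\<dots> = (\<Sum>ch\<in>CH. \<Sum>k\<in>A. sgnc a ch * of_bool (Qc a ch k))"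
      unfolding Yc by (simp add: sum_distrib_left)
    also have "\<dots> = (\<Sum>k\<in>A. \<Sum>ch\<in>CH. sgnc a ch * of_bool (Qc a ch k))"
      by (rule sum.swap)
    also have "\<dots> = (\<Sum>k\<in>A. of_bool (\<forall>i<a - 1. k i = k (Suc i)))"
      unfolding CH_def key_sum ..
    also have "\<dots> = of_nat (card {k\<in>A. \<forall>i<a - 1. k i = k (Suc i)})"
      using fA by (simp add: sum.inter_filter[symmetric] Int_def)
    also have "{k\<in>A. \<forall>i<a - 1. k i = k (Suc i)} = {k \<in> {0..<a} \<rightarrow>\<^sub>E (UNIV::int set). image_mset k (mset_set {0..<a}) = m \<and> (\<forall>i<a - 1. k i = k (Suc i))}"
      unfolding A_def by auto
    also have "card \<dots> = card {i. replicate_mset a i = m}" by (rule alleq_card[OF a])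
    also have "{i. replicate_mset a i = m} = {i. replicate_mset a i + replicate_mset 0 (- i) = m}" by simp
    finally show "(\<Sum>(c, P)\<leftarrow>cs. c * Y P m) = p_ab a 0 m" unfolding p_ab_def .
  qed
  thus ?thesis by blast
qed

theorem theorem6p5:
  fixes a :: nat
  assumes "a \<ge> 1"
  shows "(\<exists>cs. represents cs (p_ab a 0)) \<and>
         (\<forall>cs. represents cs (p_ab a 0) \<longrightarrow> phi_comb cs = [:-1, 1:] ^ a - [:(-1) ^ a:])"
proof (intro conjI allI impI)
  show "\<exists>cs. represents cs (p_ab a 0)" by (rule repr_exists[OF assms])
next
  fix cs assume r: "represents cs (p_ab a 0)"
  define D where "D = max a (Max (insert 0 ((\<lambda>x. card (V (snd x))) ` set cs)))"
  have aD: "a \<le> D" by (simp add: D_def)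
  have cD: "card (V (snd x)) \<le> D" if "x \<in> set cs" for x
  proof -
    have "card (V (snd x)) \<le> Max (insert 0 ((\<lambda>x. card (V (snd x))) ` set cs))"
      by (rule Max_ge) (use that in auto)
    thus ?thesis unfolding D_def by simp
  qed
  have sp: "signed_poset (snd x)" if "x \<in> set cs" for x
    using r that unfolding represents_def by (cases x) fastforce
  have "Phi D (p_ab a 0) = (\<Sum>(c, P)\<leftarrow>cs. smult c (Phi D (Y P)))" by (rule Phi_repr[OF r])
  also have "\<dots> = (\<Sum>(c, P)\<leftarrow>cs. monom c (sinks P))"
  proof (rule arg_cong[where f = sum_list], rule map_cong[OF refl])
    fix x assume x: "x \<in> set cs"
    obtain c P where xe: "x = (c, P)" by (cases x)
    have "Phi D (Y P) = [:0,1:] ^ sinks P" using Phi_Y[of P D] sp[OF x] cD[OF x] xe by simp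
    thus "(case x of (c, P) \<Rightarrow> smult c (Phi D (Y P))) = (case x of (c, P) \<Rightarrow> monom c (sinks P))"
      unfolding xe by (simp add: monom_altdef)
  qed
  finally have "phi_comb cs = Phi D (p_ab a 0)" unfolding phi_comb_def by simp
  thus "phi_comb cs = [:-1, 1:] ^ a - [:(-1) ^ a:]" using Phi_p[OF assms aD] by simp
qed

end
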